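(* Let $p$ be a prime and $G$ a $p$-group of maximal class of order $p^m$ ($m\ge 4$) with positive degree of commutativity. (1) If $G$ possesses an abelian maximal subgroup, then $$A_G(t)=\frac{1}{p^m}\left(\frac{p}{1-p^mt}+\frac{p^m-p^{m-1}}{1-p^2t}+\frac{p^{m-1}-p}{1-p^{m-1}t}\right).$$ (2) If $[P_1,P_3]=1$ and $G$ possesses no abelian maximal subgroup, then $$A_G(t)=\frac{1}{p^m}\left(\frac{p}{1-p^mt}+\frac{p^m-p^{m-1}}{1-p^2t}+\frac{p^{m-1}-p^{m-3}}{1-p^{m-2}t}+\frac{p^{m-3}-p}{1-p^{m-1}t}\right).$$
   Context: For a finite group $G$ and $n\ge0$, let $\alpha_{G,n}$ be the number of orbits of $G$ acting on $G^n$ by simultaneous conjugation, and $A_G(t)=\sum_{n\ge0}\alpha_{G,n}t^n$. A group of order $p^m$ with $m\ge4$ is of maximal class if it has nilpotency class $m-1$. Let $\gamma_i(G)$ be the lower central series ($\gamma_1(G)=G$, $\gamma_{i+1}(G)=[\gamma_i(G),G]$). Define $P_0=G$, $P_1$ to be the centralizer in $G$ of $\gamma_2(G)/\gamma_4(G)$ (i.e. $\{g\in G: [g,\gamma_2(G)]\le\gamma_4(G)\}$), and $P_i=\gamma_i(G)$ for $2\le i\le m$. The degree of commutativity $l$ of $G$ is the maximum integer such that $[P_i,P_j]\le P_{i+j+l}$ for all $i,j\ge1$ if $P_1$ is not abelian (with $P_k=1$ for $k\ge m$), and $l=m-3$ if $P_1$ is abelian. Positive degree of commutativity means $l>0$.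 *)

theory Defs
  imports "HOL-Algebra.Generated_Groups" "HOL-Computational_Algebra.Formal_Power_Series"
begin

definition sim_conj :: "('a, 'b) monoid_scheme \<Rightarrow> nat \<Rightarrow> 'a \<Rightarrow> (nat \<Rightarrow> 'a) \<Rightarrow> (nat \<Rightarrow> 'a)" where
  "sim_conj G n g x = (\<lambda>i. if i < n then g \<otimes>\<^bsub>G\<^esub> x i \<otimes>\<^bsub>G\<^esub> inv\<^bsub>G\<^esub> g else undefined)"

definition conj_orbit :: "('a, 'b) monoid_scheme \<Rightarrow> nat \<Rightarrow> (nat \<Rightarrow> 'a) \<Rightarrow> (nat \<Rightarrow> 'a) set" where
  "conj_orbit G n x = (\<lambda>g. sim_conj G n g x) ` carrier G"

definition alpha :: "('a, 'b) monoid_scheme \<Rightarrow> nat \<Rightarrow> nat" where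
  "alpha G n = card (conj_orbit G n ` ({0..<n} \<rightarrow>\<^sub>E carrier G))"

definition orbit_gf :: "('a, 'b) monoid_scheme \<Rightarrow> rat fps" where
  "orbit_gf G = Abs_fps (\<lambda>n. of_nat (alpha G n))"

definition comm_subgroup :: "('a, 'b) monoid_scheme \<Rightarrow> 'a set \<Rightarrow> 'a set \<Rightarrow> 'a set" where
  "comm_subgroup G H K = generate G
     (\<Union>h\<in>H. \<Union>k\<in>K. {h \<otimes>\<^bsub>G\<^esub> k \<otimes>\<^bsub>G\<^esub> inv\<^bsub>G\<^esub> h \<otimes>\<^bsub>G\<^esub> inv\<^bsub>G\<^esub> k})"

(* lower central series: gamma 1 = G, gamma (i+1) = [gamma i, G]; gamma 0 := G by convention *)
fun lcs :: "('a, 'b) monoid_scheme \<Rightarrow> nat \<Rightarrow> 'a set" where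
  "lcs G 0 = carrier G"
| "lcs G (Suc 0) = carrier G"
| "lcs G (Suc (Suc i)) = comm_subgroup G (lcs G (Suc i)) (carrier G)"

definition nilpotency_class :: "('a, 'b) monoid_scheme \<Rightarrow> nat" where
  "nilpotency_class G = (LEAST c. lcs G (Suc c) = {\<one>\<^bsub>G\<^esub>})"

definition maximal_class :: "('a, 'b) monoid_scheme \<Rightarrow> nat \<Rightarrow> nat \<Rightarrow> bool" where
  "maximal_class G p m \<longleftrightarrow> group G \<and> finite (carrier G) \<and> prime p \<and> 4 \<le> m \<and>
     order G = p ^ m \<and> nilpotency_class G = m - 1"

definition P_series :: "('a, 'b) monoid_scheme \<Rightarrow> nat \<Rightarrow> nat \<Rightarrow> 'a set" where
  "P_series G m i =
     (if i = 0 then carrier G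
      else if i = 1 then {g \<in> carrier G. comm_subgroup G {g} (lcs G 2) \<subseteq> lcs G 4}
      else if i \<le> m then lcs G i
      else {\<one>\<^bsub>G\<^esub>})"

definition abelian_set :: "('a, 'b) monoid_scheme \<Rightarrow> 'a set \<Rightarrow> bool" where
  "abelian_set G H \<longleftrightarrow> (\<forall>x\<in>H. \<forall>y\<in>H. x \<otimes>\<^bsub>G\<^esub> y = y \<otimes>\<^bsub>G\<^esub> x)"

definition doc_condition :: "('a, 'b) monoid_scheme \<Rightarrow> nat \<Rightarrow> nat \<Rightarrow> bool" where
  "doc_condition G m l \<longleftrightarrow> (\<forall>i\<ge>1. \<forall>j\<ge>1.
      comm_subgroup G (P_series G m i) (P_series G m j) \<subseteq> P_series G m (i + j + l))"

definition degree_of_commutativity :: "('a, 'b) monoid_scheme \<Rightarrow> nat \<Rightarrow> nat" where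
  "degree_of_commutativity G m =
     (if abelian_set G (P_series G m 1) then m - 3
      else (GREATEST l. doc_condition G m l))"

definition maximal_subgroup :: "('a, 'b) monoid_scheme \<Rightarrow> 'a set \<Rightarrow> bool" where
  "maximal_subgroup G H \<longleftrightarrow> subgroup H G \<and> H \<noteq> carrier G \<and>
     (\<forall>K. subgroup K G \<and> H \<subseteq> K \<longrightarrow> K = H \<or> K = carrier G)"

end

theory Submission
  imports Defs "HOL-Algebra.Group_Action" "HOL-Computational_Algebra.Primes"
begin

definition cmt :: "('a,'b) monoid_scheme \<Rightarrow> 'a \<Rightarrow> 'a \<Rightarrow> 'a" where
 "cmt G x y = x \<otimes>\<^bsub>G\<^esub> y \<otimes>\<^bsub>G\<^esub> inv\<^bsub>G\<^esub> x \<otimes>\<^bsub>G\<^esub> inv\<^bsub>G\<^esub> y"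

context group begin

lemma cancel1[simp]: "x \<in> carrier G \<Longrightarrow> z \<in> carrier G \<Longrightarrow> x \<otimes> (inv x \<otimes> z) = z"
  by (simp add: m_assoc[symmetric])
lemma cancel2[simp]: "x \<in> carrier G \<Longrightarrow> z \<in> carrier G \<Longrightarrow> inv x \<otimes> (x \<otimes> z) = z"
  by (simp add: m_assoc[symmetric])

lemma cmt_closed[simp]: "x \<in> carrier G \<Longrightarrow> y \<in> carrier G \<Longrightarrow> cmt G x y \<in> carrier G"
  by (simp add: cmt_def)

lemma cmt_inv: "x \<in> carrier G \<Longrightarrow> y \<in> carrier G \<Longrightarrow> inv (cmt G x y) = cmt G y x"
  by (simp add: cmt_def inv_mult_group m_assoc)

lemma cmt_self[simp]: "x \<in> carrier G \<Longrightarrow> cmt G x x = \<one>"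
  by (simp add: cmt_def m_assoc)

lemma cmt_one_left[simp]: "x \<in> carrier G \<Longrightarrow> cmt G \<one> x = \<one>"
  by (simp add: cmt_def)

lemma cmt_one_right[simp]: "x \<in> carrier G \<Longrightarrow> cmt G x \<one> = \<one>"
  by (simp add: cmt_def)

lemma cmt_alt: "x \<in> carrier G \<Longrightarrow> y \<in> carrier G \<Longrightarrow> cmt G x y = (x \<otimes> y) \<otimes> inv (y \<otimes> x)"
  by (simp add: cmt_def inv_mult_group m_assoc)

lemma cmt_one_iff: "x \<in> carrier G \<Longrightarrow> y \<in> carrier G \<Longrightarrow> cmt G x y = \<one> \<longleftrightarrow> x \<otimes> y = y \<otimes> x"
  by (metis cmt_alt inv_closed m_closed inv_inv inv_solve_right l_one r_inv)

lemma cmt_mult_left: "g1 \<in> carrier G \<Longrightarrow> g2 \<in> carrier G \<Longrightarrow> y \<in> carrier G \<Longrightarrow>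
   cmt G (g1 \<otimes> g2) y = (g1 \<otimes> cmt G g2 y \<otimes> inv g1) \<otimes> cmt G g1 y"
  by (simp add: cmt_def m_assoc inv_mult_group)

lemma cmt_inv_left: "g \<in> carrier G \<Longrightarrow> y \<in> carrier G \<Longrightarrow>
   cmt G (inv g) y = inv g \<otimes> inv (cmt G g y) \<otimes> g"
  by (simp add: cmt_def m_assoc inv_mult_group)

lemma cmt_conj: "g \<in> carrier G \<Longrightarrow> a \<in> carrier G \<Longrightarrow> b \<in> carrier G \<Longrightarrow>
   g \<otimes> cmt G a b \<otimes> inv g = cmt G (g \<otimes> a \<otimes> inv g) (g \<otimes> b \<otimes> inv g)"
  by (simp add: cmt_def m_assoc inv_mult_group)

lemma cm_subgroup:
  assumes N: "N \<lhd> G" and y: "y \<in> carrier G"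
  shows "subgroup {g \<in> carrier G. cmt G g y \<in> N} G"
proof (rule subgroupI)
  interpret N: normal N G by (rule N)
  show "{g \<in> carrier G. cmt G g y \<in> N} \<subseteq> carrier G" by blast
  show "{g \<in> carrier G. cmt G g y \<in> N} \<noteq> {}" using y by auto
  fix a assume a: "a \<in> {g \<in> carrier G. cmt G g y \<in> N}"
  then have "inv (cmt G a y) \<in> N" by auto
  then have "inv a \<otimes> inv (cmt G a y) \<otimes> a \<in> N" using a N.inv_op_closed1 by auto
  then show "inv a \<in> {g \<in> carrier G. cmt G g y \<in> N}" using a y by (simp add: cmt_inv_left)
next
  interpret N: normal N G by (rule N)
  fix a b assume a: "a \<in> {g \<in> carrier G. cmt G g y \<in> N}" and b: "b \<in> {g \<in> carrier G. cmt G g y \<in> N}"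
  then have "a \<otimes> cmt G b y \<otimes> inv a \<in> N" using N.inv_op_closed2 by auto
  then have "(a \<otimes> cmt G b y \<otimes> inv a) \<otimes> cmt G a y \<in> N" using a by auto
  then show "a \<otimes> b \<in> {g \<in> carrier G. cmt G g y \<in> N}" using a b y by (simp add: cmt_mult_left)
qed

lemma cm_sym:
  assumes "subgroup N G" "x \<in> carrier G" "y \<in> carrier G" "cmt G x y \<in> N"
  shows "cmt G y x \<in> N"
  using assms subgroup.m_inv_closed cmt_inv by metis

lemma comm_subgroup_le:
  assumes "subgroup N G" "H \<subseteq> carrier G" "K \<subseteq> carrier G"
  shows "comm_subgroup G H K \<subseteq> N \<longleftrightarrow> (\<forall>h\<in>H. \<forall>k\<in>K. cmt G h k \<in> N)"
proof
  assume "comm_subgroup G H K \<subseteq> N"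
  then show "\<forall>h\<in>H. \<forall>k\<in>K. cmt G h k \<in> N"
    unfolding comm_subgroup_def cmt_def by (blast intro: generate.incl)
next
  assume "\<forall>h\<in>H. \<forall>k\<in>K. cmt G h k \<in> N"
  then show "comm_subgroup G H K \<subseteq> N"
    unfolding comm_subgroup_def using assms(1)
    by (intro generate_subgroup_incl) (auto simp: cmt_def)
qed

lemma comm_subgroup_mem: "h \<in> H \<Longrightarrow> k \<in> K \<Longrightarrow> cmt G h k \<in> comm_subgroup G H K"
  unfolding comm_subgroup_def cmt_def by (blast intro: generate.incl)

lemma comm_subgroup_subgroup: "H \<subseteq> carrier G \<Longrightarrow> K \<subseteq> carrier G \<Longrightarrow> subgroup (comm_subgroup G H K) G"
  unfolding comm_subgroup_def by (rule generate_is_subgroup) (blast intro: m_closed inv_closed)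

lemma lcs_Suc: "1 \<le> i \<Longrightarrow> lcs G (Suc i) = comm_subgroup G (lcs G i) (carrier G)"
  by (cases i) auto

lemma lcs_normal: "lcs G i \<lhd> G"
proof (induction i)
  case 0 then show ?case by (simp add: normal_self)
next
  case (Suc i)
  show ?case
  proof (cases i)
    case 0 then show ?thesis by (simp add: normal_self)
  next
    case (Suc j)
    interpret N: normal "lcs G i" G by (rule Suc.IH)
    have eq: "lcs G (Suc i) = generate G (\<Union>h\<in>lcs G i. \<Union>k\<in>carrier G. {h \<otimes> k \<otimes> inv h \<otimes> inv k})"
      using Suc by (simp add: comm_subgroup_def)
    show ?thesis unfolding eq
    proof (rule normal_generateI)
      show "(\<Union>h\<in>lcs G i. \<Union>k\<in>carrier G. {h \<otimes> k \<otimes> inv h \<otimes> inv k}) \<subseteq> carrier G"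
        using N.subset by auto
      fix h g assume h: "h \<in> (\<Union>h\<in>lcs G i. \<Union>k\<in>carrier G. {h \<otimes> k \<otimes> inv h \<otimes> inv k})" and g: "g \<in> carrier G"
      then obtain a k where a: "a \<in> lcs G i" "k \<in> carrier G" "h = cmt G a k" by (auto simp: cmt_def)
      have ac: "a \<in> carrier G" using a N.subset by auto
      have "g \<otimes> h \<otimes> inv g = cmt G (g \<otimes> a \<otimes> inv g) (g \<otimes> k \<otimes> inv g)"
        using a ac g cmt_conj by auto
      moreover have "g \<otimes> a \<otimes> inv g \<in> lcs G i" using N.inv_op_closed2 a g by auto
      ultimately show "g \<otimes> h \<otimes> inv g \<in> (\<Union>h\<in>lcs G i. \<Union>k\<in>carrier G. {h \<otimes> k \<otimes> inv h \<otimes> inv k})"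
        using g a by (auto simp: cmt_def)
    qed
  qed
qed

lemma lcs_subgroup: "subgroup (lcs G i) G"
  using lcs_normal normal_imp_subgroup by blast

lemma lcs_carrier: "lcs G i \<subseteq> carrier G"
  using lcs_subgroup subgroup.subset by blast

lemma lcs_one[simp]: "\<one> \<in> lcs G i"
  using lcs_subgroup subgroup.one_closed by blast

lemma lcs_cmt: "1 \<le> i \<Longrightarrow> a \<in> lcs G i \<Longrightarrow> g \<in> carrier G \<Longrightarrow> cmt G a g \<in> lcs G (Suc i)"
  using lcs_Suc comm_subgroup_mem by metis

lemma lcs_cmt': "1 \<le> i \<Longrightarrow> a \<in> lcs G i \<Longrightarrow> g \<in> carrier G \<Longrightarrow> cmt G g a \<in> lcs G (Suc i)"
  using lcs_cmt cm_sym lcs_subgroup lcs_carrier by blast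

lemma lcs_Suc_le: "lcs G (Suc i) \<subseteq> lcs G i"
proof (cases "i = 0")
  case True then show ?thesis by simp
next
  case False
  interpret N: normal "lcs G i" G by (rule lcs_normal)
  have "\<forall>h\<in>lcs G i. \<forall>k\<in>carrier G. cmt G h k \<in> lcs G i"
  proof (intro ballI)
    fix h k assume h: "h \<in> lcs G i" and k: "k \<in> carrier G"
    have hc: "h \<in> carrier G" using h N.subset by auto
    have "k \<otimes> inv h \<otimes> inv k \<in> lcs G i" using N.inv_op_closed2 h k by auto
    then have "h \<otimes> (k \<otimes> inv h \<otimes> inv k) \<in> lcs G i" using h by auto
    then show "cmt G h k \<in> lcs G i" using hc k by (simp add: cmt_def m_assoc)
  qed
  then show ?thesis using False lcs_Suc[of i] comm_subgroup_le[OF lcs_subgroup lcs_carrier]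
    by auto
qed

lemma lcs_antimono: "i \<le> j \<Longrightarrow> lcs G j \<subseteq> lcs G i"
proof (induction j rule: dec_induct)
  case base then show ?case by simp
next
  case (step j) then show ?case using lcs_Suc_le[of j] by blast
qed

lemma lcs_stable:
  assumes "1 \<le> i" "lcs G (Suc i) = lcs G i" "i \<le> j"
  shows "lcs G j = lcs G i"
  using assms(3)
proof (induction j rule: dec_induct)
  case base then show ?case by simp
next
  case (step j)
  have "lcs G (Suc j) = comm_subgroup G (lcs G j) (carrier G)" using step assms(1) lcs_Suc by auto
  also have "\<dots> = lcs G (Suc i)" using step assms(1) lcs_Suc by auto
  finally show ?case using assms(2) by simp
qed

lemma card_subgroup_dvd:
  assumes "subgroup H G" "subgroup K G" "H \<subseteq> K"
  shows "card H dvd card K"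
proof -
  have "group (G\<lparr>carrier := K\<rparr>)" using assms(2) subgroup_imp_group by blast
  moreover have "subgroup H (G\<lparr>carrier := K\<rparr>)" using subgroup_incl assms by blast
  ultimately have "card (rcosets\<^bsub>G\<lparr>carrier := K\<rparr>\<^esub> H) * card H = order (G\<lparr>carrier := K\<rparr>)"
    using group.lagrange by blast
  then show ?thesis unfolding order_def by (metis dvd_triv_right partial_object.select_convs(1) partial_object.surjective partial_object.update_convs(1))
qed

end

declare lcs.simps(3)[simp del]

context group begin

lemma hall_witt:
  assumes "x \<in> carrier G" "y \<in> carrier G" "z \<in> carrier G"
  shows "(x \<otimes> cmt G (cmt G (inv x) y) z \<otimes> inv x) \<otimes> (z \<otimes> cmt G (cmt G (inv z) x) y \<otimes> inv z)
          \<otimes> (y \<otimes> cmt G (cmt G (inv y) z) x \<otimes> inv y) = \<one>"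
  using assms by (simp add: cmt_def m_assoc inv_mult_group)

lemma lcs_mutual_aux:
  "\<And>j a b. 1 \<le> j \<Longrightarrow> a \<in> lcs G (Suc k) \<Longrightarrow> b \<in> lcs G j \<Longrightarrow> cmt G a b \<in> lcs G (Suc k + j)"
proof (induction k)
  case 0
  then show ?case using lcs_cmt'[of j b a] lcs_carrier by auto
next
  case (Suc i)
  let ?N = "lcs G (Suc (Suc i) + j)"
  interpret N: normal ?N G by (rule lcs_normal)
  have bc: "b \<in> carrier G" using Suc.prems lcs_carrier by auto
  have gen: "\<forall>a'\<in>lcs G (Suc i). \<forall>g\<in>carrier G. cmt G a' g \<in> {c \<in> carrier G. cmt G c b \<in> ?N}"
  proof (intro ballI)
    fix a' g assume a': "a' \<in> lcs G (Suc i)" and g: "g \<in> carrier G"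
    have a'c: "a' \<in> carrier G" using a' lcs_carrier by auto
    define x where "x = inv a'"
    have xc: "x \<in> carrier G" using a'c x_def by auto
    have x_lcs: "x \<in> lcs G (Suc i)" using subgroup.m_inv_closed[OF lcs_subgroup a'] x_def by simp
    let ?T1 = "x \<otimes> cmt G (cmt G (inv x) g) b \<otimes> inv x"
    let ?T2 = "b \<otimes> cmt G (cmt G (inv b) x) g \<otimes> inv b"
    let ?T3 = "g \<otimes> cmt G (cmt G (inv g) b) x \<otimes> inv g"
    have hw: "?T1 \<otimes> ?T2 \<otimes> ?T3 = \<one>" using hall_witt[OF xc g bc] .
    have ib: "inv b \<in> lcs G j" using subgroup.m_inv_closed[OF lcs_subgroup Suc.prems(3)] by simp
    have "cmt G x (inv b) \<in> lcs G (Suc i + j)" using Suc.IH[OF Suc.prems(1) x_lcs ib] .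
    then have "cmt G (inv b) x \<in> lcs G (Suc i + j)"
      using cm_sym[OF lcs_subgroup] xc bc by auto
    then have "cmt G (cmt G (inv b) x) g \<in> lcs G (Suc (Suc i + j))"
      using lcs_cmt[of "Suc i+j"] g by auto
    then have T2: "?T2 \<in> ?N" using N.inv_op_closed2 bc by auto
    have "cmt G (inv g) b \<in> lcs G (Suc j)" using lcs_cmt'[of j b "inv g"] Suc.prems g by auto
    then have "cmt G x (cmt G (inv g) b) \<in> lcs G (Suc i + Suc j)" using Suc.IH[OF _ x_lcs] by (metis le_add1 plus_1_eq_Suc)
    then have "cmt G x (cmt G (inv g) b) \<in> ?N" by (simp only: add_Suc_right add_Suc)
    then have "cmt G (cmt G (inv g) b) x \<in> ?N"
      using cm_sym[OF lcs_subgroup, of x "cmt G (inv g) b"] xc bc g by auto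
    then have T3: "?T3 \<in> ?N" using N.inv_op_closed2 g by auto
    have T1c: "?T1 \<in> carrier G" using xc g bc by auto
    have T23: "?T2 \<otimes> ?T3 \<in> ?N" by (rule N.m_closed[OF T2 T3])
    have T2c: "?T2 \<in> carrier G" and T3c: "?T3 \<in> carrier G" using xc g bc by auto
    have "?T1 \<otimes> (?T2 \<otimes> ?T3) = \<one>" using hw T1c T2c T3c by (simp add: m_assoc)
    then have "inv (?T2 \<otimes> ?T3) = ?T1" using T1c T2c T3c by (intro inv_equality) auto
    then have "?T1 = inv (?T2 \<otimes> ?T3)" by simp
    then have T1: "?T1 \<in> ?N" using N.m_inv_closed[OF T23] by simp
    have "inv x \<otimes> ?T1 \<otimes> x \<in> ?N" using N.inv_op_closed1 T1 xc by auto
    moreover have "inv x \<otimes> ?T1 \<otimes> x = cmt G (cmt G a' g) b"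
      using xc g bc x_def a'c by (simp add: m_assoc)
    ultimately show "cmt G a' g \<in> {c \<in> carrier G. cmt G c b \<in> ?N}" using a'c g by auto
  qed
  have "comm_subgroup G (lcs G (Suc i)) (carrier G) \<subseteq> {c \<in> carrier G. cmt G c b \<in> ?N}"
    using comm_subgroup_le[OF cm_subgroup[OF lcs_normal bc] lcs_carrier order_refl] gen by blast
  then have "lcs G (Suc (Suc i)) \<subseteq> {c \<in> carrier G. cmt G c b \<in> ?N}"
    using lcs_Suc[of "Suc i"] by simp
  then show ?case using Suc.prems by auto
qed

lemma lcs_mutual:
  assumes "1 \<le> i" "1 \<le> j" "a \<in> lcs G i" "b \<in> lcs G j"
  shows "cmt G a b \<in> lcs G (i + j)"
  using lcs_mutual_aux[of j a "i - 1" b] assms by simp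

lemma pgroup_center:
  assumes fin: "finite (carrier G)" and p: "prime p" and ord: "order G = p ^ k" and k: "1 \<le> k"
  shows "\<exists>x \<in> carrier G. x \<noteq> \<one> \<and> (\<forall>g \<in> carrier G. g \<otimes> x = x \<otimes> g)"
proof -
  define \<phi> where "\<phi> = (\<lambda>g. \<lambda>h \<in> carrier G. g \<otimes> h \<otimes> inv g)"
  interpret A: group_action G "carrier G" \<phi> using action_by_conjugation \<phi>_def by simp
  let ?O = "orbits G (carrier G) \<phi>"
  have finO: "finite ?O" unfolding orbits_def using fin by (simp add: setcompr_eq_image)
  have "(\<Sum>orb\<in>?O. \<Sum>x\<in>orb. (1::nat)) = (\<Sum>x\<in>carrier G. 1)"
    using A.disjoint_sum[OF fin] .
  then have sum: "(\<Sum>orb\<in>?O. card orb) = order G" by (simp add: order_def)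
  have dvd: "p dvd card orb" if orbO: "orb \<in> ?O" and c1: "card orb \<noteq> 1" for orb
  proof -
    obtain x where x: "x \<in> carrier G" "orb = orbit G \<phi> x" using orbO unfolding orbits_def by auto
    have "card orb dvd p ^ k" using A.orbit_stabilizer_theorem[OF x(1)] x ord by (metis dvd_triv_left)
    then obtain i where "i \<le> k" "card orb = p ^ i" using divides_primepow_nat[OF p] by auto
    then show ?thesis using c1 by (cases i) auto
  qed
  let ?S = "{orb \<in> ?O. card orb = 1}"
  have s1: "(\<Sum>orb\<in>?O. card orb) = (\<Sum>orb\<in>?S. card orb) + (\<Sum>orb\<in>?O - ?S. card orb)"
    using sum.subset_diff[of ?S ?O card] finO by auto
  have s2: "(\<Sum>orb\<in>?S. card orb) = card ?S" by simp
  have s3: "p dvd (\<Sum>orb\<in>?O - ?S. card orb)" using dvd by (intro dvd_sum) auto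
  have s4: "p dvd order G" using ord k by (simp add: dvd_power)
  have "card ?S + (\<Sum>orb\<in>?O - ?S. card orb) = order G" using s1 s2 sum by simp
  then have "p dvd card ?S + (\<Sum>orb\<in>?O - ?S. card orb)" using s4 by simp
  then have pS: "p dvd card ?S" using dvd_add_left_iff[OF s3] by blast
  have one_orb: "orbit G \<phi> \<one> = {\<one>}" unfolding orbit_def \<phi>_def by (auto intro!: exI[of _ \<one>])
  have "{\<one>} \<in> ?S" using one_orb unfolding orbits_def by force
  moreover have finS: "finite ?S" using finO by auto
  ultimately have "card ?S \<noteq> 0" by auto
  then have "card ?S \<ge> p" using pS by (simp add: dvd_imp_le)
  then have c2: "card ?S \<ge> 2" using prime_ge_2_nat[OF p] by linarith
  have "\<not> ?S \<subseteq> {{\<one>}}"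
  proof
    assume "?S \<subseteq> {{\<one>}}"
    then have "card ?S \<le> card {{\<one>}}" by (intro card_mono) auto
    then show False using c2 by simp
  qed
  then obtain orb where orb: "orb \<in> ?O" "card orb = 1" "orb \<noteq> {\<one>}" by auto
  obtain x where x: "x \<in> carrier G" "orb = orbit G \<phi> x" using orb unfolding orbits_def by auto
  have "x \<in> orb" using x A.orbit_refl by auto
  then have ox: "orb = {x}" using orb(2) by (metis card_1_singletonE singletonD)
  show ?thesis
  proof (intro bexI conjI ballI)
    show "x \<noteq> \<one>" using ox orb by auto
    fix g assume g: "g \<in> carrier G"
    have "\<phi> g x \<in> orb" using x g unfolding orbit_def by auto
    then have "g \<otimes> x \<otimes> inv g = x" using ox x g \<phi>_def by auto
    then show "g \<otimes> x = x \<otimes> g" using g x by (metis inv_solve_right m_closed)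
  qed (rule x(1))
qed

end

fun ucs :: "('a, 'b) monoid_scheme \<Rightarrow> nat \<Rightarrow> 'a set" where
  "ucs G 0 = {\<one>\<^bsub>G\<^esub>}"
| "ucs G (Suc k) = {x \<in> carrier G. \<forall>g \<in> carrier G. cmt G x g \<in> ucs G k}"

context group begin

lemma ucs_normal: "ucs G k \<lhd> G"
proof (induction k)
  case 0 then show ?case using one_is_normal by simp
next
  case (Suc k)
  interpret N: normal "ucs G k" G by (rule Suc.IH)
  have eq: "ucs G (Suc k) = \<Inter> ((\<lambda>g. {x \<in> carrier G. cmt G x g \<in> ucs G k}) ` carrier G)"
    by auto
  have sg: "subgroup (ucs G (Suc k)) G"
    unfolding eq by (rule subgroups_Inter) (auto intro: cm_subgroup[OF Suc.IH])
  show ?case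
  proof (rule normal_invI[OF sg])
    fix x h assume x: "x \<in> carrier G" and h: "h \<in> ucs G (Suc k)"
    have hc: "h \<in> carrier G" using h by simp
    show "x \<otimes> h \<otimes> inv x \<in> ucs G (Suc k)"
    proof (simp add: x hc, intro ballI)
      fix g assume g: "g \<in> carrier G"
      have "cmt G h (inv x \<otimes> g \<otimes> x) \<in> ucs G k" using h g x by simp
      then have "x \<otimes> cmt G h (inv x \<otimes> g \<otimes> x) \<otimes> inv x \<in> ucs G k" using N.inv_op_closed2 x by auto
      moreover have "x \<otimes> cmt G h (inv x \<otimes> g \<otimes> x) \<otimes> inv x = cmt G (x \<otimes> h \<otimes> inv x) g"
        using cmt_conj[of x h "inv x \<otimes> g \<otimes> x"] x hc g by (simp add: m_assoc)
      ultimately show "cmt G (x \<otimes> h \<otimes> inv x) g \<in> ucs G k" by simp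
    qed
  qed
qed

lemma ucs_carrier: "ucs G k \<subseteq> carrier G"
  using ucs_normal normal_imp_subgroup subgroup.subset by blast

lemma ucs_mono: "ucs G k \<subseteq> ucs G (Suc k)"
proof
  fix x assume x: "x \<in> ucs G k"
  interpret N: normal "ucs G k" G by (rule ucs_normal)
  have xc: "x \<in> carrier G" using x ucs_carrier by auto
  show "x \<in> ucs G (Suc k)"
  proof (simp add: xc, intro ballI)
    fix g assume g: "g \<in> carrier G"
    have "g \<otimes> inv x \<otimes> inv g \<in> ucs G k" using N.inv_op_closed2 x g by auto
    then have "x \<otimes> (g \<otimes> inv x \<otimes> inv g) \<in> ucs G k" using x by auto
    then show "cmt G x g \<in> ucs G k" using xc g by (simp add: cmt_def m_assoc)
  qed
qed

lemma ucs_strict: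
  assumes fin: "finite (carrier G)" and p: "prime p" and ord: "order G = p ^ m"
    and ne: "ucs G k \<noteq> carrier G"
  shows "\<exists>x \<in> ucs G (Suc k). x \<notin> ucs G k"
proof -
  let ?N = "ucs G k"
  interpret N: normal ?N G by (rule ucs_normal)
  interpret Q: group "G Mod ?N" by (rule N.factorgroup_is_group)
  have sN: "subgroup ?N G" by (rule N.subgroup_axioms)
  have lag: "card (rcosets ?N) * card ?N = order G" by (rule lagrange[OF sN])
  have "card ?N dvd p ^ m" using lag ord by (metis dvd_triv_right)
  then obtain i where i: "i \<le> m" "card ?N = p ^ i" using divides_primepow_nat[OF p] by auto
  have "card ?N < card (carrier G)" using ne ucs_carrier fin by (simp add: psubset_card_mono psubsetI)
  then have "p ^ i < p ^ m" using i ord unfolding order_def by simp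
  then have "i < m" using power_less_imp_less_exp prime_gt_1_nat[OF p] by blast
  have "card (rcosets ?N) * p ^ i = p ^ m" using lag i ord by simp
  moreover have "p ^ m = p ^ (m - i) * p ^ i" using \<open>i < m\<close> by (simp add: power_add[symmetric])
  ultimately have "card (rcosets ?N) * p ^ i = p ^ (m - i) * p ^ i" by simp
  then have "card (rcosets ?N) = p ^ (m - i)" using p prime_gt_0_nat by simp
  then have ordQ: "order (G Mod ?N) = p ^ (m - i)" unfolding order_def FactGroup_def by simp
  have finQ: "finite (carrier (G Mod ?N))" unfolding FactGroup_def using fin
    by (simp add: RCOSETS_def)
  have "1 \<le> m - i" using \<open>i < m\<close> by simp
  from Q.pgroup_center[OF finQ p ordQ this] obtain X where X: "X \<in> carrier (G Mod ?N)" "X \<noteq> \<one>\<^bsub>G Mod ?N\<^esub>"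
     "\<forall>Y \<in> carrier (G Mod ?N). Y \<otimes>\<^bsub>G Mod ?N\<^esub> X = X \<otimes>\<^bsub>G Mod ?N\<^esub> Y"
    by blast
  obtain x where x: "x \<in> carrier G" "X = ?N #> x" using X(1) unfolding FactGroup_def RCOSETS_def by auto
  have xN: "x \<notin> ?N" using X(2) x coset_join2[OF x(1) sN] by auto
  have "x \<in> ucs G (Suc k)"
  proof (simp add: x(1), intro ballI)
    fix g assume g: "g \<in> carrier G"
    have "?N #> g \<in> carrier (G Mod ?N)" using g unfolding FactGroup_def RCOSETS_def by auto
    then have "(?N #> g) <#> (?N #> x) = (?N #> x) <#> (?N #> g)" using X(3) x by simp
    then have "?N #> (g \<otimes> x) = ?N #> (x \<otimes> g)" using N.rcos_sum g x by simp
    then have "x \<otimes> g \<in> ?N #> (g \<otimes> x)" using rcos_self[of "x \<otimes> g" ?N] sN x g by auto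
    then have "(x \<otimes> g) \<otimes> inv (g \<otimes> x) \<in> ?N" using N.rcos_module_imp[OF is_group] x g by auto
    then show "cmt G x g \<in> ?N" using cmt_alt x g by simp
  qed
  then show ?thesis using xN by blast
qed

lemma pgroup_nilpotent:
  assumes fin: "finite (carrier G)" and p: "prime p" and ord: "order G = p ^ m"
  shows "\<exists>c. lcs G (Suc c) = {\<one>}"
proof -
  have "\<exists>c. ucs G c = carrier G"
  proof (rule ccontr)
    assume "\<not> ?thesis"
    then have ne: "\<And>k. ucs G k \<noteq> carrier G" by auto
    have "card (ucs G k) \<ge> Suc k" for k
    proof (induction k)
      case 0 then show ?case by simp
    next
      case (Suc k)
      obtain x where "x \<in> ucs G (Suc k)" "x \<notin> ucs G k" using ucs_strict[OF fin p ord ne] by blast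
      then have "ucs G k \<subset> ucs G (Suc k)" using ucs_mono by blast
      moreover have "finite (ucs G (Suc k))" using ucs_carrier fin finite_subset by blast
      ultimately have "card (ucs G k) < card (ucs G (Suc k))" by (rule psubset_card_mono[rotated])
      then show ?case using Suc by simp
    qed
    moreover have "card (ucs G k) \<le> card (carrier G)" for k using ucs_carrier fin card_mono by blast
    ultimately have "Suc (card (carrier G)) \<le> card (carrier G)" by (meson order_trans)
    then show False by simp
  qed
  then obtain c where c: "ucs G c = carrier G" by blast
  have "j \<le> c \<Longrightarrow> lcs G (Suc j) \<subseteq> ucs G (c - j)" for j
  proof (induction j)
    case 0 then show ?case using c by simp
  next
    case (Suc j)
    have "lcs G (Suc (Suc j)) = comm_subgroup G (lcs G (Suc j)) (carrier G)" by (simp add: lcs.simps(3))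
    also have "\<dots> \<subseteq> ucs G (c - Suc j)"
    proof (subst comm_subgroup_le[OF normal_imp_subgroup[OF ucs_normal] lcs_carrier], simp, intro ballI)
      fix h k assume h: "h \<in> lcs G (Suc j)" and k: "k \<in> carrier G"
      have "h \<in> ucs G (c - j)" using Suc.IH Suc.prems h by auto
      moreover have "c - j = Suc (c - Suc j)" using Suc.prems by arith
      ultimately have "h \<in> ucs G (Suc (c - Suc j))" by simp
      then show "cmt G h k \<in> ucs G (c - Suc j)" using k by simp
    qed
    finally show ?case .
  qed
  then have "lcs G (Suc c) \<subseteq> {\<one>}" by (metis diff_self_eq_0 le_refl ucs.simps(1))
  then show ?thesis using lcs_one by blast
qed

end

declare lcs.simps(3)[simp del]

locale mc = group G for G (structure) +
  fixes p m :: nat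
  assumes fin: "finite (carrier G)" and prime: "prime p" and m4: "4 \<le> m"
    and ord: "order G = p ^ m" and cls: "nilpotency_class G = m - 1"
begin

lemma p_gt1: "1 < p" using prime prime_gt_1_nat by blast
lemma p_pos: "0 < p" using p_gt1 by simp

lemma card_G: "card (carrier G) = p ^ m" using ord unfolding order_def .

lemma fin_sub: "H \<subseteq> carrier G \<Longrightarrow> finite H" using fin finite_subset by blast

lemma card_pow: assumes "subgroup H G" shows "\<exists>k\<le>m. card H = p ^ k"
proof -
  have "card H dvd card (carrier G)"
    using card_subgroup_dvd[OF assms subgroup_self subgroup.subset[OF assms]] .
  then show ?thesis using card_G divides_primepow_nat[OF prime] by auto
qed

lemma card_pos: assumes "subgroup H G" shows "0 < card H"
proof -
  have "\<one> \<in> H" using assms subgroup.one_closed by blast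
  then show ?thesis using fin_sub[OF subgroup.subset[OF assms]] card_gt_0_iff by blast
qed

lemma strict_sub_card:
  assumes "subgroup H G" "subgroup K G" "H \<subseteq> K" "H \<noteq> K"
  shows "p * card H \<le> card K"
proof -
  obtain a where a: "card H = p ^ a" using card_pow[OF assms(1)] by blast
  obtain b where b: "card K = p ^ b" using card_pow[OF assms(2)] by blast
  have "card H < card K" using assms fin_sub[OF subgroup.subset[OF assms(2)]]
    by (simp add: psubset_card_mono)
  then have "a < b" using a b power_less_imp_less_exp p_gt1 by metis
  then have "p ^ Suc a \<le> p ^ b" using p_gt1 by (intro power_increasing) auto
  then show ?thesis using a b by simp
qed

lemma sandwich:
  assumes A: "subgroup A G" and B: "subgroup B G" and K: "subgroup K G"
    and AB: "A \<subseteq> B" and AK: "A \<subseteq> K" and cB: "card B = p * card A"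
    and x: "x \<in> K" "x \<in> B" "x \<notin> A"
  shows "B \<subseteq> K"
proof -
  let ?KB = "K \<inter> B"
  have KB: "subgroup ?KB G" using subgroups_Inter_pair[OF K B] .
  have d1: "card A dvd card ?KB" using card_subgroup_dvd[OF A KB] AB AK by blast
  then obtain d where d: "card ?KB = card A * d" by (auto elim: dvdE)
  have d2: "card ?KB dvd card B" using card_subgroup_dvd[OF KB B] by blast
  have cA: "0 < card A" using card_pos[OF A] .
  have "card A * d dvd card A * p" using d d2 cB by (simp add: mult.commute)
  then have "d dvd p" using cA by simp
  then have "d = 1 \<or> d = p" using prime by (simp add: prime_nat_iff)
  moreover have "d \<noteq> 1"
  proof
    assume "d = 1"
    then have "card ?KB = card A" using d by simp
    moreover have "A \<subseteq> ?KB" using AB AK by blast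
    moreover have "finite ?KB" using fin_sub KB subgroup.subset by blast
    ultimately have "A = ?KB" by (simp add: card_subset_eq)
    then show False using x by blast
  qed
  ultimately have "d = p" by blast
  then have "card ?KB = card B" using d cB by (simp add: mult.commute)
  moreover have "finite B" using fin_sub B subgroup.subset by blast
  ultimately have "?KB = B" using card_subset_eq[of B ?KB] by blast
  then show ?thesis by blast
qed

lemma nilp: "\<exists>c. lcs G (Suc c) = {\<one>}" using pgroup_nilpotent[OF fin prime ord] .

lemma lcs_m: "lcs G m = {\<one>}"
proof -
  have "lcs G (Suc (LEAST c. lcs G (Suc c) = {\<one>})) = {\<one>}" using LeastI_ex[OF nilp] .
  then have "lcs G (Suc (m - 1)) = {\<one>}" using cls unfolding nilpotency_class_def by simp
  moreover have "Suc (m - 1) = m" using m4 by simp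
  ultimately show ?thesis by simp
qed

lemma lcs_m1: "lcs G (m - 1) \<noteq> {\<one>}"
proof
  assume a: "lcs G (m - 1) = {\<one>}"
  have "m - 2 < (LEAST c. lcs G (Suc c) = {\<one>})" using cls m4 unfolding nilpotency_class_def by simp
  then have "lcs G (Suc (m - 2)) \<noteq> {\<one>}" by (rule not_less_Least)
  moreover have "Suc (m - 2) = m - 1" using m4 by simp
  ultimately show False using a by simp
qed

lemma lcs_strict:
  assumes "1 \<le> i" "i \<le> m - 1"
  shows "lcs G (Suc i) \<noteq> lcs G i"
proof
  assume eq: "lcs G (Suc i) = lcs G i"
  have "i \<le> m" using assms by simp
  then have "lcs G m = lcs G i" using lcs_stable[OF assms(1) eq] by blast
  moreover have "lcs G (m - 1) \<subseteq> lcs G i" using lcs_antimono assms(2) by blast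
  ultimately show False using lcs_m lcs_m1 lcs_one by blast
qed

lemma lcs_strict_elem:
  assumes "1 \<le> i" "i \<le> m - 1"
  obtains x where "x \<in> lcs G i" "x \<notin> lcs G (Suc i)"
  using lcs_strict[OF assms] lcs_Suc_le by blast

lemma all_comm_mod3_False:
  assumes "\<forall>g\<in>carrier G. \<forall>y\<in>carrier G. cmt G g y \<in> lcs G 3"
  shows False
proof -
  have "comm_subgroup G (carrier G) (carrier G) \<subseteq> lcs G 3"
    using assms comm_subgroup_le[OF lcs_subgroup[of 3], of "carrier G" "carrier G"] by simp
  moreover have "lcs G 2 = comm_subgroup G (carrier G) (carrier G)" by (simp add: numeral_2_eq_2 lcs.simps(3))
  ultimately have "lcs G 2 \<subseteq> lcs G 3" by simp
  then have "lcs G (Suc 2) = lcs G 2" using lcs_Suc_le[of 2] by (simp add: numeral_3_eq_3)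
  moreover have "2 \<le> m - 1" using m4 by simp
  ultimately show False using lcs_strict[of 2] by simp
qed

lemma C_sub: "y \<in> carrier G \<Longrightarrow> subgroup {g \<in> carrier G. cmt G g y \<in> lcs G k} G"
  by (rule cm_subgroup[OF lcs_normal])

lemma lcs_le_card: "card (lcs G 2) * p ^ 2 \<le> p ^ m"
proof (rule ccontr)
  assume a: "\<not> ?thesis"
  obtain k where k: "k \<le> m" "card (lcs G 2) = p ^ k" using card_pow[OF lcs_subgroup] by blast
  have ne: "lcs G 2 \<noteq> carrier G" using lcs_strict[of 1] m4 by (simp add: numeral_2_eq_2)
  have "p * card (lcs G 2) \<le> card (carrier G)"
    using strict_sub_card[OF lcs_subgroup subgroup_self lcs_carrier ne] .
  then have "p ^ Suc k \<le> p ^ m" using k card_G by simp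
  then have "Suc k \<le> m" using power_le_imp_le_exp[OF p_gt1] by blast
  moreover have "\<not> k + 2 \<le> m" using a k p_gt1
    by (metis power_add power_increasing less_imp_le_nat)
  ultimately have km: "Suc k = m" by simp
  have "p ^ m = p * p ^ k" using km[symmetric] by simp
  then have cG: "card (carrier G) = p * card (lcs G 2)" using k card_G by simp
  have "1 \<le> m - 1" using m4 by simp
  then obtain x where x: "x \<in> lcs G 1" "x \<notin> lcs G (Suc 1)"
    using lcs_strict_elem[of 1] by blast
  then have x: "x \<in> carrier G" "x \<notin> lcs G 2" by (auto simp: numeral_2_eq_2)
  have sub3: "lcs G 2 \<subseteq> {g \<in> carrier G. cmt G g y \<in> lcs G 3}" if "y \<in> carrier G" for y
    using lcs_cmt[of 2] that lcs_carrier by (auto simp: numeral_3_eq_3)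
  have allx: "carrier G \<subseteq> {g \<in> carrier G. cmt G g x \<in> lcs G 3}"
    using sandwich[OF lcs_subgroup subgroup_self C_sub[OF x(1)] lcs_carrier sub3[OF x(1)] cG, of x] x
    by auto
  have "\<forall>g\<in>carrier G. \<forall>y\<in>carrier G. cmt G g y \<in> lcs G 3"
  proof (intro ballI)
    fix g y assume g: "g \<in> carrier G" and y: "y \<in> carrier G"
    have "cmt G y x \<in> lcs G 3" using allx y by auto
    then have "x \<in> {g \<in> carrier G. cmt G g y \<in> lcs G 3}" using cm_sym[OF lcs_subgroup] x y by auto
    then have "carrier G \<subseteq> {g \<in> carrier G. cmt G g y \<in> lcs G 3}"
      using sandwich[OF lcs_subgroup subgroup_self C_sub[OF y] lcs_carrier sub3[OF y] cG, of x] x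
      by auto
    then show "cmt G g y \<in> lcs G 3" using g by auto
  qed
  then show False by (rule all_comm_mod3_False)
qed

end

context group begin

lemma fiber_lemma:
  assumes N: "N \<lhd> G" and M: "M \<subseteq> carrier G"
    and cent: "\<And>c u. c \<in> M \<Longrightarrow> u \<in> carrier G \<Longrightarrow> cmt G u c \<in> N"
    and Minv: "\<And>c. c \<in> M \<Longrightarrow> inv c \<in> M"
    and g: "g \<in> carrier G" and h: "h \<in> carrier G" and w: "w \<in> carrier G"
    and cg: "cmt G g w \<in> M" and ch: "cmt G h w \<in> M"
    and eq: "cmt G g w \<otimes> inv (cmt G h w) \<in> N"
  shows "cmt G (g \<otimes> inv h) w \<in> N"
proof -
  interpret N: normal N G by (rule N)
  let ?u = "g \<otimes> inv h"
  let ?cg = "cmt G g w" and ?ch = "cmt G h w"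
  have uc: "?u \<in> carrier G" using g h by auto
  have id: "cmt G ?u w = cmt G ?u (inv ?ch) \<otimes> (inv ?ch \<otimes> ?cg)"
    using g h w by (simp add: cmt_def m_assoc inv_mult_group)
  have t1: "cmt G ?u (inv ?ch) \<in> N" using cent[OF Minv[OF ch] uc] .
  have "inv ?ch \<otimes> (?cg \<otimes> inv ?ch) \<otimes> ?ch \<in> N" using N.inv_op_closed1[OF _ eq] g h w by auto
  then have t2: "inv ?ch \<otimes> ?cg \<in> N" using g h w by (simp add: m_assoc)
  show ?thesis using id t1 t2 by simp
qed

end

context mc begin

lemma lcs_card_ge: "k \<le> m - 1 \<Longrightarrow> p ^ k \<le> card (lcs G (m - k))"
proof (induction k)
  case 0 then show ?case using lcs_m by simp
next
  case (Suc k)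
  let ?i = "m - Suc k"
  have i1: "1 \<le> ?i" "?i \<le> m - 1" using Suc.prems by auto
  have si: "Suc ?i = m - k" using Suc.prems by auto
  have "p * card (lcs G (Suc ?i)) \<le> card (lcs G ?i)"
    using strict_sub_card[OF lcs_subgroup lcs_subgroup lcs_Suc_le lcs_strict[OF i1]] .
  moreover have "p ^ k \<le> card (lcs G (Suc ?i))" using Suc si by simp
  ultimately show ?case by (metis (no_types, lifting) dual_order.trans mult_le_mono2 power_Suc)
qed

lemma lcs_card_le: "2 \<le> i \<Longrightarrow> i \<le> m \<Longrightarrow> card (lcs G i) * p ^ (i - 2) \<le> p ^ (m - 2)"
proof (induction i rule: dec_induct)
  case base
  have "m = (m - 2) + 2" using m4 by simp
  then have "p ^ m = p ^ (m - 2) * p ^ 2" by (metis power_add)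
  then have "card (lcs G 2) * p ^ 2 \<le> p ^ (m - 2) * p ^ 2"
    using lcs_le_card by simp
  then show ?case using p_pos by simp
next
  case (step i)
  have i1: "1 \<le> i" "i \<le> m - 1" using step by auto
  have "p * card (lcs G (Suc i)) \<le> card (lcs G i)"
    using strict_sub_card[OF lcs_subgroup lcs_subgroup lcs_Suc_le lcs_strict[OF i1]] .
  moreover have "Suc i - 2 = Suc (i - 2)" using step(1) by simp
  then have "p ^ (Suc i - 2) = p * p ^ (i - 2)" by (metis power_Suc)
  ultimately have "card (lcs G (Suc i)) * p ^ (Suc i - 2) \<le> card (lcs G i) * p ^ (i - 2)"
    by (simp add: mult.commute mult.left_commute)
  then show ?case using step by simp
qed

lemma lcs_card: assumes "2 \<le> i" "i \<le> m" shows "card (lcs G i) = p ^ (m - i)"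
proof (rule antisym)
  have "card (lcs G i) * p ^ (i - 2) \<le> p ^ (m - i) * p ^ (i - 2)"
    using lcs_card_le[OF assms] assms by (simp add: power_add[symmetric])
  then show "card (lcs G i) \<le> p ^ (m - i)" using p_pos by simp
  have "p ^ (m - i) \<le> card (lcs G (m - (m - i)))" using lcs_card_ge[of "m - i"] assms by simp
  then show "p ^ (m - i) \<le> card (lcs G i)" using assms by simp
qed

lemma lcs_card_step: assumes "2 \<le> i" "i < m" shows "card (lcs G i) = p * card (lcs G (Suc i))"
  using lcs_card[OF assms(1)] lcs_card[of "Suc i"] assms
  by (simp add: Suc_diff_Suc power_Suc[symmetric] less_imp_le_nat)

lemma card_G_step: "card (carrier G) = p * p * card (lcs G 2)"
proof -
  have "m = Suc (Suc (m - 2))" using m4 by simp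
  then have "p ^ m = p * p * p ^ (m - 2)" by (metis power_Suc mult.assoc)
  then show ?thesis using lcs_card[of 2] m4 card_G by simp
qed

definition P1 where "P1 = {g \<in> carrier G. \<forall>a \<in> lcs G 2. cmt G g a \<in> lcs G 4}"

lemma P1_series: "P_series G m 1 = P1"
proof -
  have "comm_subgroup G {g} (lcs G 2) \<subseteq> lcs G 4 \<longleftrightarrow> (\<forall>a \<in> lcs G 2. cmt G g a \<in> lcs G 4)"
    if "g \<in> carrier G" for g
    using comm_subgroup_le[OF lcs_subgroup, of "{g}" "lcs G 2" 4] that lcs_carrier by auto
  then show ?thesis unfolding P_series_def P1_def by auto
qed

lemma P1_subgroup: "subgroup P1 G"
proof -
  have "P1 = \<Inter> ((\<lambda>a. {g \<in> carrier G. cmt G g a \<in> lcs G 4}) ` lcs G 2)"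
    unfolding P1_def using lcs_one[of 2] by blast
  moreover have "subgroup (\<Inter> ((\<lambda>a. {g \<in> carrier G. cmt G g a \<in> lcs G 4}) ` lcs G 2)) G"
  proof (rule subgroups_Inter)
    show "(\<lambda>a. {g \<in> carrier G. cmt G g a \<in> lcs G 4}) ` lcs G 2 \<noteq> {}" using lcs_one[of 2] by blast
  qed (use lcs_carrier C_sub in auto)
  ultimately show ?thesis by simp
qed

lemma P1_carrier: "P1 \<subseteq> carrier G" unfolding P1_def by auto

lemma lcs32: "lcs G 3 \<subseteq> lcs G 2" using lcs_Suc_le[of 2] by (simp add: numeral_3_eq_3)

lemma card23: "card (lcs G 2) = p * card (lcs G 3)"
  using lcs_card_step[of 2] m4 by (simp add: numeral_3_eq_3)

lemma sub4: "y \<in> carrier G \<Longrightarrow> lcs G 3 \<subseteq> {g \<in> carrier G. cmt G g y \<in> lcs G 4}"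
  using lcs_cmt[of 3] lcs_carrier by (auto simp: numeral_Bit0 numeral_3_eq_3)

lemma obtain_w: obtains w where "w \<in> lcs G 2" "w \<notin> lcs G 3"
proof -
  have "1 \<le> (2::nat)" "2 \<le> m - 1" using m4 by auto
  then show ?thesis using lcs_strict_elem[of 2] that by (auto simp: numeral_3_eq_3)
qed

lemma lcs2_comm4: assumes "a \<in> lcs G 2" "b \<in> lcs G 2" shows "cmt G a b \<in> lcs G 4"
proof -
  obtain w where w: "w \<in> lcs G 2" "w \<notin> lcs G 3" by (rule obtain_w)
  have wc: "w \<in> carrier G" using w lcs_carrier by auto
  have "lcs G 2 \<subseteq> {g \<in> carrier G. cmt G g w \<in> lcs G 4}"
    by (rule sandwich[OF lcs_subgroup lcs_subgroup C_sub[OF wc] lcs32 sub4[OF wc] card23, of w])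
      (use w wc in auto)
  then have "cmt G b w \<in> lcs G 4" using assms by auto
  then have bw: "w \<in> {g \<in> carrier G. cmt G g b \<in> lcs G 4}"
    using cm_sym[OF lcs_subgroup] wc assms lcs_carrier by blast
  have bc: "b \<in> carrier G" using assms lcs_carrier by auto
  have "lcs G 2 \<subseteq> {g \<in> carrier G. cmt G g b \<in> lcs G 4}"
    by (rule sandwich[OF lcs_subgroup lcs_subgroup C_sub[OF bc] lcs32 sub4[OF bc] card23, of w])
      (use w bw in auto)
  then show ?thesis using assms by auto
qed

lemma lcs2_P1: "lcs G 2 \<subseteq> P1"
  unfolding P1_def using lcs2_comm4 lcs_carrier by auto

lemma P1_ne: "P1 \<noteq> carrier G"
proof
  assume a: "P1 = carrier G"
  have "\<forall>h\<in>lcs G 2. \<forall>k\<in>carrier G. cmt G h k \<in> lcs G 4"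
  proof (intro ballI)
    fix h k assume h: "h \<in> lcs G 2" and k: "k \<in> carrier G"
    have "cmt G k h \<in> lcs G 4" using a k h unfolding P1_def by auto
    then show "cmt G h k \<in> lcs G 4" using cm_sym[OF lcs_subgroup] k h lcs_carrier by blast
  qed
  then have "comm_subgroup G (lcs G 2) (carrier G) \<subseteq> lcs G 4"
    using comm_subgroup_le[OF lcs_subgroup lcs_carrier order_refl] by blast
  then have "lcs G 3 \<subseteq> lcs G 4" using lcs_Suc[of 2] by (simp add: numeral_3_eq_3)
  then have "lcs G (Suc 3) = lcs G 3" using lcs_Suc_le[of 3] by (simp add: numeral_Bit0)
  moreover have "3 \<le> m - 1" using m4 by simp
  ultimately show False using lcs_strict[of 3] by simp
qed

lemma P1_alt:
  assumes w: "w \<in> lcs G 2" "w \<notin> lcs G 3"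
  shows "P1 = {g \<in> carrier G. cmt G g w \<in> lcs G 4}"
proof
  show "P1 \<subseteq> {g \<in> carrier G. cmt G g w \<in> lcs G 4}" using w unfolding P1_def by auto
next
  show "{g \<in> carrier G. cmt G g w \<in> lcs G 4} \<subseteq> P1"
  proof
    fix g assume g: "g \<in> {g \<in> carrier G. cmt G g w \<in> lcs G 4}"
    have gc: "g \<in> carrier G" and gw: "cmt G g w \<in> lcs G 4" using g by auto
    have wc: "w \<in> carrier G" using w lcs_carrier by auto
    have "w \<in> {a \<in> carrier G. cmt G a g \<in> lcs G 4}" using cm_sym[OF lcs_subgroup gc wc gw] wc by auto
    then have "lcs G 2 \<subseteq> {a \<in> carrier G. cmt G a g \<in> lcs G 4}"
      by (intro sandwich[OF lcs_subgroup lcs_subgroup C_sub[OF gc] lcs32 sub4[OF gc] card23, of w])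
        (use w in auto)
    then show "g \<in> P1" unfolding P1_def using gc cm_sym[OF lcs_subgroup] lcs_carrier by blast
  qed
qed

end

context group begin

lemma coset_count:
  assumes fin: "finite (carrier G)" and K: "subgroup K G" and A: "subgroup A G"
  shows "card K \<le> card (K \<inter> A) * card (rcosets A)"
proof -
  have KA: "subgroup (K \<inter> A) G" using subgroups_Inter_pair[OF K A] .
  have finK: "finite K" using fin K subgroup.subset finite_subset by blast
  have cover: "K \<subseteq> (\<Union>R\<in>rcosets A. K \<inter> R)"
  proof
    fix k assume k: "k \<in> K"
    have kc: "k \<in> carrier G" using k K subgroup.subset by blast
    have "A #> k \<in> rcosets A" using rcosetsI[OF subgroup.subset[OF A] kc] .
    moreover have "k \<in> A #> k" using rcos_self[OF kc A] .
    ultimately show "k \<in> (\<Union>R\<in>rcosets A. K \<inter> R)" using k by blast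
  qed
  have each: "card (K \<inter> R) \<le> card (K \<inter> A)" if R: "R \<in> rcosets A" for R
  proof (cases "K \<inter> R = {}")
    case True then show ?thesis by simp
  next
    case False
    then obtain k0 where k0: "k0 \<in> K" "k0 \<in> R" by blast
    obtain a where a: "a \<in> carrier G" "R = A #> a" using R unfolding RCOSETS_def by blast
    have k0c: "k0 \<in> carrier G" using k0 K subgroup.subset by blast
    have sub: "K \<inter> R \<subseteq> (K \<inter> A) #> k0"
    proof
      fix k assume k: "k \<in> K \<inter> R"
      have kc: "k \<in> carrier G" using k K subgroup.subset by blast
      have ka: "k \<otimes> inv a \<in> A" using subgroup.rcos_module_imp[OF A is_group a(1)] k a by blast
      have k0a: "k0 \<otimes> inv a \<in> A" using subgroup.rcos_module_imp[OF A is_group a(1)] k0 a by blast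
      have "(k \<otimes> inv a) \<otimes> inv (k0 \<otimes> inv a) \<in> A"
        using subgroup.m_closed[OF A ka subgroup.m_inv_closed[OF A k0a]] .
      then have "k \<otimes> inv k0 \<in> A" using kc k0c a(1) by (simp add: m_assoc inv_mult_group)
      moreover have "k \<otimes> inv k0 \<in> K" using subgroup.m_closed[OF K _ subgroup.m_inv_closed[OF K k0(1)]] k by blast
      ultimately show "k \<in> (K \<inter> A) #> k0"
        using subgroup.rcos_module_rev[OF KA is_group k0c kc] by blast
    qed
    have "finite ((K \<inter> A) #> k0)"
      using rcosets_finite[OF rcosetsI[OF _ k0c]] KA subgroup.subset finK by (meson finite_Int)
    then have "card (K \<inter> R) \<le> card ((K \<inter> A) #> k0)" using sub card_mono by blast
    also have "\<dots> = card (K \<inter> A)"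
      using card_rcosets_equal[OF rcosetsI[OF _ k0c]] KA subgroup.subset by metis
    finally show ?thesis .
  qed
  have finR: "finite (rcosets A)" using fin
    by (metis A cosets_finite finite_UnionD rcosets_part_G subgroup.subset)
  have "card K \<le> card (\<Union>R\<in>rcosets A. K \<inter> R)"
    using cover card_mono finR finK by (meson finite_Int finite_UN_I)
  also have "\<dots> \<le> (\<Sum>R\<in>rcosets A. card (K \<inter> R))" by (rule card_UN_le[OF finR])
  also have "\<dots> \<le> (\<Sum>R\<in>rcosets A. card (K \<inter> A))" using each by (rule sum_mono)
  also have "\<dots> = card (K \<inter> A) * card (rcosets A)" by simp
  finally show ?thesis .
qed

end

context mc begin

lemma card34: "card (lcs G 3) = p * card (lcs G 4)"
  using lcs_card_step[of 3] m4 by (simp add: numeral_Bit0 numeral_3_eq_3)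

lemma lcs43: "lcs G 4 \<subseteq> lcs G 3" using lcs_Suc_le[of 3] by (simp add: numeral_Bit0 numeral_3_eq_3)

lemma pm1: "p ^ m = p * p ^ (m - 1)"
proof -
  have "m = Suc (m - 1)" using m4 by simp
  then show ?thesis by (metis power_Suc)
qed

lemma P1_card: "card P1 = p ^ (m - 1)"
proof (rule antisym)
  have "p * card P1 \<le> card (carrier G)"
    using strict_sub_card[OF P1_subgroup subgroup_self P1_carrier P1_ne] .
  moreover have "p ^ m = p * p ^ (m - 1)" using pm1 by simp
  ultimately show "card P1 \<le> p ^ (m - 1)" using card_G p_pos by simp
next
  obtain w where w: "w \<in> lcs G 2" "w \<notin> lcs G 3" by (rule obtain_w)
  have wc: "w \<in> carrier G" using w lcs_carrier by auto
  have P1a: "P1 = {g \<in> carrier G. cmt G g w \<in> lcs G 4}" by (rule P1_alt[OF w])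
  let ?H3 = "G\<lparr>carrier := lcs G 3\<rparr>"
  let ?V = "(\<lambda>c. lcs G 4 #> c) ` lcs G 3"
  have grp: "group ?H3" using subgroup_imp_group[OF lcs_subgroup] .
  have s4: "subgroup (lcs G 4) ?H3" using subgroup_incl[OF lcs_subgroup lcs_subgroup lcs43] .
  have "card (rcosets\<^bsub>?H3\<^esub> (lcs G 4)) * card (lcs G 4) = order ?H3"
    using group.lagrange[OF grp s4] .
  moreover have "rcosets\<^bsub>?H3\<^esub> (lcs G 4) = ?V" unfolding RCOSETS_def by auto
  ultimately have "card ?V * card (lcs G 4) = card (lcs G 3)" unfolding order_def by simp
  then have cV: "card ?V = p" using card34 card_pos[OF lcs_subgroup[of 4]] by simp
  have finV: "finite ?V" using fin_sub[OF lcs_carrier] by simp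
  define F where "F v = {g \<in> carrier G. lcs G 4 #> cmt G g w = v}" for v
  have cover: "carrier G \<subseteq> (\<Union>v\<in>?V. F v)"
  proof
    fix g assume g: "g \<in> carrier G"
    have "cmt G g w \<in> lcs G (Suc 2)" using lcs_cmt'[of 2 w g] w g by simp
    then have "cmt G g w \<in> lcs G 3" by (simp add: numeral_3_eq_3)
    then show "g \<in> (\<Union>v\<in>?V. F v)" using g unfolding F_def by blast
  qed
  interpret N4: normal "lcs G 4" G by (rule lcs_normal)
  have eachF: "card (F v) \<le> card P1" for v
  proof (cases "F v = {}")
    case True then show ?thesis by simp
  next
    case False
    then obtain h where h: "h \<in> carrier G" "lcs G 4 #> cmt G h w = v" unfolding F_def by blast
    have hw3: "cmt G h w \<in> lcs G 3" using lcs_cmt'[of 2 w h] w h by (simp add: numeral_3_eq_3)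
    have sub: "F v \<subseteq> P1 #> h"
    proof
      fix g assume gF: "g \<in> F v"
      have g: "g \<in> carrier G" using gF unfolding F_def by blast
      have gw3: "cmt G g w \<in> lcs G 3" using lcs_cmt'[of 2 w g] w g by (simp add: numeral_3_eq_3)
      have "lcs G 4 #> cmt G g w = lcs G 4 #> cmt G h w" using gF h unfolding F_def by simp
      then have "cmt G g w \<in> lcs G 4 #> cmt G h w" using rcos_self[OF _ lcs_subgroup] g wc by auto
      then have "cmt G g w \<otimes> inv (cmt G h w) \<in> lcs G 4" using N4.rcos_module_imp[OF is_group] h wc by auto
      then have "cmt G (g \<otimes> inv h) w \<in> lcs G 4"
      proof (rule fiber_lemma[OF lcs_normal lcs_carrier _ _ g h(1) wc gw3 hw3, rotated 2])
        show "\<And>c u. c \<in> lcs G 3 \<Longrightarrow> u \<in> carrier G \<Longrightarrow> cmt G u c \<in> lcs G 4"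
          using lcs_cmt'[of 3] by (simp add: numeral_Bit0 numeral_3_eq_3)
        show "\<And>c. c \<in> lcs G 3 \<Longrightarrow> inv c \<in> lcs G 3" by (rule subgroup.m_inv_closed[OF lcs_subgroup])
      qed
      then have "g \<otimes> inv h \<in> P1" using P1a g h by auto
      then show "g \<in> P1 #> h" using subgroup.rcos_module_rev[OF P1_subgroup is_group h(1) g] by blast
    qed
    have "finite (P1 #> h)" using rcosets_finite[OF rcosetsI[OF P1_carrier h(1)] P1_carrier fin_sub[OF P1_carrier]] .
    then have "card (F v) \<le> card (P1 #> h)" using sub card_mono by blast
    also have "\<dots> = card P1" using card_rcosets_equal[OF rcosetsI[OF P1_carrier h(1)] P1_carrier] by simp
    finally show ?thesis .
  qed
  have finF: "finite (F v)" for v using fin unfolding F_def by simp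
  have "card (carrier G) \<le> card (\<Union>v\<in>?V. F v)" using cover card_mono finV finF by (meson finite_UN_I)
  also have "\<dots> \<le> (\<Sum>v\<in>?V. card (F v))" by (rule card_UN_le[OF finV])
  also have "\<dots> \<le> (\<Sum>v\<in>?V. card P1)" using eachF by (rule sum_mono)
  also have "\<dots> = p * card P1" using cV by simp
  finally have "p ^ m \<le> p * card P1" using card_G by simp
  moreover have "p ^ m = p * p ^ (m - 1)" using pm1 by simp
  ultimately show "p ^ (m - 1) \<le> card P1" using p_pos by simp
qed

end

context mc begin

lemma card_P1_lcs2: "card P1 = p * card (lcs G 2)"
proof -
  have "m - 1 = Suc (m - 2)" using m4 by simp
  then have "p ^ (m - 1) = p * p ^ (m - 2)" by (metis power_Suc)
  then show ?thesis using P1_card lcs_card[of 2] m4 by simp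
qed

lemma card_G_P1: "card (carrier G) = p * card P1" using card_G P1_card pm1 by simp

lemma sub3: "y \<in> carrier G \<Longrightarrow> lcs G 2 \<subseteq> {g \<in> carrier G. cmt G g y \<in> lcs G 3}"
  using lcs_cmt[of 2] lcs_carrier by (auto simp: numeral_3_eq_3)

lemma C3_all:
  assumes y: "y \<in> carrier G" and z: "z \<in> P1" "z \<notin> lcs G 2" and x: "x \<in> carrier G" "x \<notin> P1"
    and zy: "cmt G z y \<in> lcs G 3" and xy: "cmt G x y \<in> lcs G 3"
  shows "carrier G \<subseteq> {g \<in> carrier G. cmt G g y \<in> lcs G 3}"
proof -
  have "P1 \<subseteq> {g \<in> carrier G. cmt G g y \<in> lcs G 3}"
    by (rule sandwich[OF lcs_subgroup P1_subgroup C_sub[OF y] lcs2_P1 sub3[OF y] card_P1_lcs2, of z])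
      (use z zy P1_carrier in auto)
  then show ?thesis
    by (intro sandwich[OF P1_subgroup subgroup_self C_sub[OF y] P1_carrier _ card_G_P1, where x = x])
      (use x xy in auto)
qed

lemma P1_cmt3:
  assumes x: "x \<in> carrier G" "x \<notin> P1" and z: "z \<in> P1" "z \<notin> lcs G 2"
  shows "cmt G x z \<notin> lcs G 3"
proof
  assume xz: "cmt G x z \<in> lcs G 3"
  have zc: "z \<in> carrier G" using z P1_carrier by auto
  have Cz: "carrier G \<subseteq> {g \<in> carrier G. cmt G g z \<in> lcs G 3}"
    by (rule C3_all[OF zc z x]) (use zc xz in auto)
  have Cx: "carrier G \<subseteq> {g \<in> carrier G. cmt G g x \<in> lcs G 3}"
    by (rule C3_all[OF x(1) z x]) (use cm_sym[OF lcs_subgroup x(1) zc xz] x in auto)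
  have "\<forall>g\<in>carrier G. \<forall>y\<in>carrier G. cmt G g y \<in> lcs G 3"
  proof (intro ballI)
    fix g y assume g: "g \<in> carrier G" and y: "y \<in> carrier G"
    have "cmt G y z \<in> lcs G 3" using Cz y by auto
    then have zy: "cmt G z y \<in> lcs G 3" using cm_sym[OF lcs_subgroup y zc] by blast
    have "cmt G y x \<in> lcs G 3" using Cx y by auto
    then have xy: "cmt G x y \<in> lcs G 3" using cm_sym[OF lcs_subgroup y x(1)] by blast
    show "cmt G g y \<in> lcs G 3" using C3_all[OF y z x zy xy] g by auto
  qed
  then show False by (rule all_comm_mod3_False)
qed

definition cent where "cent x = {g \<in> carrier G. cmt G g x = \<one>}"

lemma cent_subgroup: "x \<in> carrier G \<Longrightarrow> subgroup (cent x) G"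
  using cm_subgroup[OF one_is_normal, of x] unfolding cent_def by simp

lemma cent_iff: "x \<in> carrier G \<Longrightarrow> g \<in> carrier G \<Longrightarrow> g \<in> cent x \<longleftrightarrow> g \<otimes> x = x \<otimes> g"
  unfolding cent_def using cmt_one_iff by auto

lemma cent_sym: "x \<in> carrier G \<Longrightarrow> g \<in> carrier G \<Longrightarrow> g \<in> cent x \<longleftrightarrow> x \<in> cent g"
  using cent_iff by metis

lemma cent_self: "x \<in> carrier G \<Longrightarrow> x \<in> cent x"
  using cent_iff by simp

lemma cent_carrier: "cent x \<subseteq> carrier G" unfolding cent_def by auto

lemma center_cent: "x \<in> carrier G \<Longrightarrow> lcs G (m - 1) \<subseteq> cent x"
proof
  fix g assume x: "x \<in> carrier G" and g: "g \<in> lcs G (m - 1)"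
  have "cmt G g x \<in> lcs G (Suc (m - 1))" using lcs_cmt[of "m - 1" g x] g x m4 by simp
  moreover have "Suc (m - 1) = m" using m4 by simp
  ultimately show "g \<in> cent x" using lcs_m g lcs_carrier unfolding cent_def by auto
qed

lemma lcs_m1_P1: "lcs G (m - 1) \<subseteq> P1"
proof -
  have "2 \<le> m - 1" using m4 by simp
  then show ?thesis using lcs_antimono[of 2 "m - 1"] lcs2_P1 by blast
qed

lemma card_lcs_m1: "card (lcs G (m - 1)) = p"
  using lcs_card[of "m - 1"] m4 by simp

lemma card_rcosets_P1: "card (rcosets P1) = p"
  using lagrange[OF P1_subgroup] card_G_P1 card_pos[OF P1_subgroup] unfolding order_def by simp

lemma cent_P1_lcs2: "x \<in> carrier G \<Longrightarrow> x \<notin> P1 \<Longrightarrow> cent x \<inter> P1 \<subseteq> lcs G 2"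
proof
  fix z assume x: "x \<in> carrier G" "x \<notin> P1" and z: "z \<in> cent x \<inter> P1"
  have zc: "z \<in> carrier G" using z P1_carrier by auto
  show "z \<in> lcs G 2"
  proof (rule ccontr)
    assume "z \<notin> lcs G 2"
    then have "cmt G x z \<notin> lcs G 3" using P1_cmt3 x z by blast
    moreover have "cmt G x z = \<one>" using z x zc cent_sym unfolding cent_def by blast
    ultimately show False by simp
  qed
qed

end

locale mcd = mc +
  assumes doc: "\<And>i g a. 2 \<le> i \<Longrightarrow> i \<le> m - 2 \<Longrightarrow> g \<in> mc.P1 G \<Longrightarrow> a \<in> lcs G i \<Longrightarrow> cmt G g a \<in> lcs G (i + 2)"
begin

lemma Gi_out:
  assumes i: "2 \<le> i" "i \<le> m - 2" and x: "x \<in> carrier G" "x \<notin> P1"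
  shows "\<exists>a\<in>lcs G i. cmt G x a \<notin> lcs G (i + 2)"
proof (rule ccontr)
  assume "\<not> ?thesis"
  then have xa: "\<forall>a\<in>lcs G i. cmt G x a \<in> lcs G (i + 2)" by blast
  let ?Gi = "{g \<in> carrier G. \<forall>a\<in>lcs G i. cmt G g a \<in> lcs G (i + 2)}"
  have eq: "?Gi = \<Inter> ((\<lambda>a. {g \<in> carrier G. cmt G g a \<in> lcs G (i + 2)}) ` lcs G i)"
    using lcs_one[of i] by blast
  have sg: "subgroup ?Gi G"
  proof (subst eq, rule subgroups_Inter)
    show "(\<lambda>a. {g \<in> carrier G. cmt G g a \<in> lcs G (i + 2)}) ` lcs G i \<noteq> {}" using lcs_one[of i] by blast
  qed (use lcs_carrier C_sub in auto)
  have "P1 \<subseteq> ?Gi" using doc i P1_carrier by auto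
  then have "carrier G \<subseteq> ?Gi"
    by (intro sandwich[OF P1_subgroup subgroup_self sg P1_carrier _ card_G_P1, where x = x]) (use x xa in auto)
  then have "\<forall>h\<in>lcs G i. \<forall>k\<in>carrier G. cmt G h k \<in> lcs G (i + 2)"
    using cm_sym[OF lcs_subgroup] lcs_carrier by blast
  then have "comm_subgroup G (lcs G i) (carrier G) \<subseteq> lcs G (i + 2)"
    using comm_subgroup_le[OF lcs_subgroup lcs_carrier order_refl] by blast
  then have "lcs G (Suc i) \<subseteq> lcs G (Suc (Suc i))" using lcs_Suc[of i] i by simp
  then have "lcs G (Suc (Suc i)) = lcs G (Suc i)" using lcs_Suc_le[of "Suc i"] by blast
  moreover have "1 \<le> Suc i" "Suc i \<le> m - 1" using i m4 by auto
  ultimately show False using lcs_strict by blast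
qed

lemma step_inj:
  assumes i: "2 \<le> i" "i \<le> m - 2" and x: "x \<in> carrier G" "x \<notin> P1"
    and y: "y \<in> lcs G i" "y \<notin> lcs G (Suc i)"
  shows "cmt G y x \<notin> lcs G (i + 2)"
proof
  assume yx: "cmt G y x \<in> lcs G (i + 2)"
  obtain a where a: "a \<in> lcs G i" "cmt G x a \<notin> lcs G (i + 2)" using Gi_out[OF i x] by blast
  have sub: "lcs G (Suc i) \<subseteq> {g \<in> carrier G. cmt G g x \<in> lcs G (i + 2)}"
    using lcs_cmt[of "Suc i"] x lcs_carrier by auto
  have cc: "card (lcs G i) = p * card (lcs G (Suc i))" using lcs_card_step i m4 by simp
  have "lcs G i \<subseteq> {g \<in> carrier G. cmt G g x \<in> lcs G (i + 2)}"
    by (rule sandwich[OF lcs_subgroup lcs_subgroup C_sub[OF x(1)] lcs_Suc_le sub cc, of y])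
      (use y yx lcs_carrier in auto)
  then have "cmt G a x \<in> lcs G (i + 2)" using a by auto
  then have "cmt G x a \<in> lcs G (i + 2)" using cm_sym[OF lcs_subgroup] a x lcs_carrier by blast
  then show False using a by blast
qed

lemma find_level:
  assumes y: "y \<in> lcs G 2" "y \<notin> lcs G (m - 1)"
  shows "\<exists>i. 2 \<le> i \<and> i \<le> m - 2 \<and> y \<in> lcs G i \<and> y \<notin> lcs G (Suc i)"
proof (rule ccontr)
  assume "\<not> ?thesis"
  then have h: "\<And>i. 2 \<le> i \<Longrightarrow> i \<le> m - 2 \<Longrightarrow> y \<in> lcs G i \<Longrightarrow> y \<in> lcs G (Suc i)" by blast
  have "t \<le> m - 3 \<Longrightarrow> y \<in> lcs G (2 + t)" for t
  proof (induction t)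
    case 0 then show ?case using y by simp
  next
    case (Suc t)
    then have "y \<in> lcs G (Suc (2 + t))" using h[of "2 + t"] by auto
    then show ?case by simp
  qed
  from this[of "m - 3"] have "y \<in> lcs G (2 + (m - 3))" by simp
  moreover have "2 + (m - 3) = m - 1" using m4 by simp
  ultimately show False using y by simp
qed

lemma cent_lcs2: "x \<in> carrier G \<Longrightarrow> x \<notin> P1 \<Longrightarrow> cent x \<inter> lcs G 2 \<subseteq> lcs G (m - 1)"
proof
  fix y assume x: "x \<in> carrier G" "x \<notin> P1" and y: "y \<in> cent x \<inter> lcs G 2"
  show "y \<in> lcs G (m - 1)"
  proof (rule ccontr)
    assume "y \<notin> lcs G (m - 1)"
    then obtain i where i: "2 \<le> i" "i \<le> m - 2" "y \<in> lcs G i" "y \<notin> lcs G (Suc i)"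
      using find_level y by blast
    have "cmt G y x \<notin> lcs G (i + 2)" using step_inj[OF i(1,2) x i(3,4)] .
    moreover have "cmt G y x = \<one>" using y unfolding cent_def by auto
    ultimately show False by simp
  qed
qed

lemma cent_out_P1: "x \<in> carrier G \<Longrightarrow> x \<notin> P1 \<Longrightarrow> cent x \<inter> P1 \<subseteq> lcs G (m - 1)"
  using cent_P1_lcs2 cent_lcs2 by blast

lemma cent_out_card: assumes x: "x \<in> carrier G" "x \<notin> P1" shows "card (cent x) = p ^ 2"
proof (rule antisym)
  have "card (cent x) \<le> card (cent x \<inter> P1) * card (rcosets P1)"
    using coset_count[OF fin cent_subgroup[OF x(1)] P1_subgroup] .
  moreover have "card (cent x \<inter> P1) \<le> p"
    using card_mono[OF fin_sub[OF lcs_carrier] cent_out_P1[OF x]] card_lcs_m1 by simp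
  ultimately have "card (cent x) \<le> p * p" using card_rcosets_P1 by (metis le_trans mult_le_mono1)
  then show "card (cent x) \<le> p ^ 2" by (simp add: power2_eq_square)
next
  have ne: "lcs G (m - 1) \<noteq> cent x" using cent_self[OF x(1)] x lcs_m1_P1 by blast
  have "p * card (lcs G (m - 1)) \<le> card (cent x)"
    using strict_sub_card[OF lcs_subgroup cent_subgroup[OF x(1)] center_cent[OF x(1)] ne] .
  then show "p ^ 2 \<le> card (cent x)" using card_lcs_m1 by (simp add: power2_eq_square)
qed

lemma center_iff: assumes x: "x \<in> carrier G" shows "cent x = carrier G \<longleftrightarrow> x \<in> lcs G (m - 1)"
proof
  assume x_in: "x \<in> lcs G (m - 1)"
  show "cent x = carrier G"
  proof
    show "cent x \<subseteq> carrier G" by (rule cent_carrier)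
    show "carrier G \<subseteq> cent x"
    proof
      fix g assume g: "g \<in> carrier G"
      have "g \<in> cent g" using cent_self g by simp
      have "x \<in> cent g" using center_cent[OF g] x_in by auto
      then show "g \<in> cent x" using cent_sym x g by blast
    qed
  qed
next
  assume all: "cent x = carrier G"
  show "x \<in> lcs G (m - 1)"
  proof (cases "x \<in> P1")
    case False
    have "p ^ m = p ^ 2" using cent_out_card[OF x False] all card_G by simp
    then have "m = 2" using p_gt1 by (simp add: power_inject_exp)
    then show ?thesis using m4 by simp
  next
    case True
    obtain y where y: "y \<in> carrier G" "y \<notin> P1" using P1_ne P1_carrier by blast
    have "y \<in> cent x" using all y by simp
    then have "x \<in> cent y" using cent_sym x y by blast
    then show ?thesis using cent_out_P1[OF y] True by blast
  qed
qed

lemma cent_in_P1: assumes x: "x \<in> P1" "x \<notin> lcs G (m - 1)" shows "cent x \<subseteq> P1"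
proof
  fix y assume y: "y \<in> cent x"
  have xc: "x \<in> carrier G" using x P1_carrier by auto
  have yc: "y \<in> carrier G" using y cent_carrier by auto
  show "y \<in> P1"
  proof (rule ccontr)
    assume "y \<notin> P1"
    moreover have "x \<in> cent y" using y cent_sym xc yc by blast
    ultimately show False using cent_out_P1[OF yc] x by blast
  qed
qed

end

lemma fps_geo:
  fixes a c :: rat
  shows "fps_const c / (1 - fps_const a * fps_X) = Abs_fps (\<lambda>n. c * a ^ n)"
proof -
  let ?g = "1 - fps_const a * fps_X"
  have g0: "fps_nth ?g 0 \<noteq> 0" by simp
  have prod: "?g * Abs_fps (\<lambda>n. a ^ n) = 1"
  proof (rule fps_ext)
    fix n show "fps_nth (?g * Abs_fps (\<lambda>n. a ^ n)) n = fps_nth (1::rat fps) n"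
      by (cases n) (simp_all add: algebra_simps fps_mult_nth_1 mult.assoc)
  qed
  have "inverse ?g = Abs_fps (\<lambda>n. a ^ n)" by (rule fps_inverse_unique[OF prod])
  then have "fps_const c / ?g = fps_const c * Abs_fps (\<lambda>n. a ^ n)"
    using fps_divide_unit[OF g0] by simp
  also have "\<dots> = Abs_fps (\<lambda>n. c * a ^ n)" by (rule fps_ext) simp
  finally show ?thesis .
qed

context mc begin

lemma burnside_alpha:
  "alpha G n * p ^ m = (\<Sum>g\<in>carrier G. card (cent g) ^ n)"
proof -
  let ?E = "{0..<n} \<rightarrow>\<^sub>E carrier G"
  define \<phi> where "\<phi> g = (\<lambda>x \<in> ?E. sim_conj G n g x)" for g
  have sc_E: "sim_conj G n g x \<in> ?E" if "g \<in> carrier G" "x \<in> ?E" for g x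
    using that unfolding sim_conj_def PiE_def Pi_def extensional_def by auto
  have sc_mult: "sim_conj G n (g \<otimes> h) x = sim_conj G n g (sim_conj G n h x)"
    if "g \<in> carrier G" "h \<in> carrier G" "x \<in> ?E" for g h x
  proof
    fix i show "sim_conj G n (g \<otimes> h) x i = sim_conj G n g (sim_conj G n h x) i"
      using that unfolding sim_conj_def PiE_def Pi_def
      by (auto simp: m_assoc inv_mult_group)
  qed
  have sc_one: "sim_conj G n \<one> x = x" if "x \<in> ?E" for x
  proof
    fix i show "sim_conj G n \<one> x i = x i"
      using that unfolding sim_conj_def PiE_def Pi_def extensional_def by auto
  qed
  have bij: "\<phi> g \<in> Bij ?E" if g: "g \<in> carrier G" for g
  proof -
    have "bij_betw (\<phi> g) ?E ?E"
    proof (rule bij_betwI[where g = "\<phi> (inv g)"])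
      show "\<phi> g \<in> ?E \<rightarrow> ?E" using sc_E g unfolding \<phi>_def by auto
      show "\<phi> (inv g) \<in> ?E \<rightarrow> ?E" using sc_E g unfolding \<phi>_def by auto
      fix x assume x: "x \<in> ?E"
      show "\<phi> (inv g) (\<phi> g x) = x" using x g sc_E sc_mult[of "inv g" g x] sc_one unfolding \<phi>_def by simp
    next
      fix x assume x: "x \<in> ?E"
      show "\<phi> g (\<phi> (inv g) x) = x" using x g sc_E sc_mult[of g "inv g" x] sc_one unfolding \<phi>_def by simp
    qed
    then show ?thesis unfolding Bij_def \<phi>_def by simp
  qed
  have act: "group_action G ?E \<phi>"
    unfolding group_action_def
  proof (rule group_hom.intro[OF is_group group_BijGroup], rule group_hom_axioms.intro, rule homI)
    fix g assume "g \<in> carrier G" then show "\<phi> g \<in> carrier (BijGroup ?E)"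
      using bij unfolding BijGroup_def by simp
  next
    fix g h assume g: "g \<in> carrier G" and h: "h \<in> carrier G"
    have "\<phi> (g \<otimes> h) = compose ?E (\<phi> g) (\<phi> h)"
    proof
      fix x show "\<phi> (g \<otimes> h) x = compose ?E (\<phi> g) (\<phi> h) x"
        using sc_mult[OF g h] sc_E[OF h] unfolding \<phi>_def compose_def by auto
    qed
    then show "\<phi> (g \<otimes> h) = \<phi> g \<otimes>\<^bsub>BijGroup ?E\<^esub> \<phi> h"
      using bij g h unfolding BijGroup_def by simp
  qed
  interpret A: group_action G ?E \<phi> by (rule act)
  have finE: "finite ?E" using fin by (simp add: finite_PiE)
  have orb: "orbits G ?E \<phi> = conj_orbit G n ` ?E"
    unfolding orbits_def orbit_def conj_orbit_def \<phi>_def by auto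
  have inv_eq: "invariants ?E \<phi> g = {0..<n} \<rightarrow>\<^sub>E cent g" if g: "g \<in> carrier G" for g
  proof -
    have c: "y \<in> carrier G \<Longrightarrow> g \<otimes> y \<otimes> inv g = y \<longleftrightarrow> y \<in> cent g" for y
      using cent_iff[OF g] g by (metis inv_solve_right m_closed)
    show ?thesis
    proof (rule Set.set_eqI, rule iffI)
      fix x assume "x \<in> invariants ?E \<phi> g"
      then have x: "x \<in> ?E" "sim_conj G n g x = x" unfolding invariants_def \<phi>_def by auto
      have "x i \<in> cent g" if "i < n" for i
      proof -
        have "g \<otimes> x i \<otimes> inv g = x i" using fun_cong[OF x(2), of i] that unfolding sim_conj_def by simp
        moreover have "x i \<in> carrier G" using x(1) that by (auto simp: PiE_iff)
        ultimately show ?thesis using c by blast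
      qed
      then show "x \<in> {0..<n} \<rightarrow>\<^sub>E cent g" using x(1) by auto
    next
      fix x assume x: "x \<in> {0..<n} \<rightarrow>\<^sub>E cent g"
      then have xE: "x \<in> ?E" using cent_carrier by auto
      have "sim_conj G n g x = x"
      proof
        fix i show "sim_conj G n g x i = x i"
          using x c cent_carrier unfolding sim_conj_def PiE_def Pi_def extensional_def by auto
      qed
      then show "x \<in> invariants ?E \<phi> g" using xE unfolding invariants_def \<phi>_def by auto
    qed
  qed
  have "card (orbits G ?E \<phi>) * order G = (\<Sum>g\<in>carrier G. card (invariants ?E \<phi> g))"
    by (rule A.burnside[OF fin finE])
  also have "\<dots> = (\<Sum>g\<in>carrier G. card (cent g) ^ n)"
    by (rule sum.cong) (simp_all add: inv_eq card_PiE)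
  finally show ?thesis using orb ord unfolding alpha_def by simp
qed

end

context mc begin

lemma P1_maximal: "maximal_subgroup G P1"
  unfolding maximal_subgroup_def
proof (intro conjI allI impI)
  show "subgroup P1 G" by (rule P1_subgroup)
  show "P1 \<noteq> carrier G" by (rule P1_ne)
  fix K assume K: "subgroup K G \<and> P1 \<subseteq> K"
  show "K = P1 \<or> K = carrier G"
  proof (cases "K = P1")
    case False
    then obtain x where x: "x \<in> K" "x \<notin> P1" using K by blast
    have "carrier G \<subseteq> K"
      by (rule sandwich[OF P1_subgroup subgroup_self _ P1_carrier _ card_G_P1, where x = x])
        (use K x subgroup.subset in auto)
    then show ?thesis using K subgroup.subset by blast
  qed simp
qed

lemma exists_P1_not_lcs2: obtains z where "z \<in> P1" "z \<notin> lcs G 2"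
proof -
  have "P1 \<noteq> lcs G 2" using card_P1_lcs2 card_pos[OF lcs_subgroup[of 2]] p_gt1 by auto
  then show ?thesis using lcs2_P1 that by blast
qed

lemma abelian_P1_iff: "abelian_set G P1 \<longleftrightarrow> (\<forall>a\<in>P1. P1 \<subseteq> cent a)"
  unfolding abelian_set_def using cent_iff P1_carrier by blast

end

context mcd begin

lemma caseA_card:
  assumes ab: "abelian_set G P1" and x: "x \<in> P1" "x \<notin> lcs G (m - 1)"
  shows "card (cent x) = p ^ (m - 1)"
proof -
  have "P1 \<subseteq> cent x" using ab x abelian_P1_iff by blast
  moreover have "cent x \<subseteq> P1" using cent_in_P1[OF x] .
  ultimately show ?thesis using P1_card by simp
qed

lemma maxab_imp_P1ab:
  assumes H: "maximal_subgroup G H" "abelian_set G H"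
  shows "abelian_set G P1"
proof -
  have sH: "subgroup H G" using H unfolding maximal_subgroup_def by blast
  have HsubP1: "H \<subseteq> P1"
  proof
    fix h assume hH: "h \<in> H"
    have hc: "h \<in> carrier G" using hH sH subgroup.subset by blast
    show "h \<in> P1"
    proof (rule ccontr)
      assume hP: "h \<notin> P1"
      have Hc: "H \<subseteq> cent h" using H(2) hH sH subgroup.subset cent_iff[OF hc]
        unfolding abelian_set_def by blast
      have "cent h \<noteq> carrier G" using center_iff[OF hc] lcs_m1_P1 hP by blast
      then have ch: "cent h = H"
        using H(1) Hc cent_subgroup[OF hc] unfolding maximal_subgroup_def by blast
      let ?K = "{g \<in> carrier G. cmt G g h \<in> lcs G 3}"
      have sK: "subgroup ?K G" using C_sub[OF hc] .
      have HK: "H \<subseteq> ?K" using ch unfolding cent_def by auto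
      obtain w where w: "w \<in> lcs G 2" "w \<notin> lcs G 3" by (rule obtain_w)
      have wK: "w \<in> ?K" using sub3[OF hc] w by auto
      have "lcs G (m - 1) \<subseteq> lcs G 3" using lcs_antimono m4 by simp
      then have wH: "w \<notin> H" using cent_lcs2[OF hc hP] w ch by blast
      obtain z where z: "z \<in> P1" "z \<notin> lcs G 2" by (rule exists_P1_not_lcs2)
      have zc: "z \<in> carrier G" using z P1_carrier by auto
      have "cmt G h z \<notin> lcs G 3" using P1_cmt3[OF hc hP z] .
      then have "cmt G z h \<notin> lcs G 3" using cm_sym[OF lcs_subgroup zc hc] by blast
      then have zK: "z \<notin> ?K" by simp
      have "?K = H \<or> ?K = carrier G" using H(1) sK HK unfolding maximal_subgroup_def by blast
      then show False using wK wH zK zc by blast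
    qed
  qed
  have "P1 = H \<or> P1 = carrier G" using H(1) P1_subgroup HsubP1 unfolding maximal_subgroup_def by blast
  then have "P1 = H" using P1_ne by blast
  then show ?thesis using H(2) by simp
qed

lemma caseB_P1ab:
  assumes c13: "\<And>g a. g \<in> P1 \<Longrightarrow> a \<in> lcs G 3 \<Longrightarrow> cmt G g a = \<one>"
    and x: "x \<in> P1" "x \<notin> lcs G 3" and Px: "P1 \<subseteq> cent x"
  shows "abelian_set G P1"
proof -
  have xc: "x \<in> carrier G" using x P1_carrier by auto
  have L3: "lcs G 3 \<subseteq> cent a" if a: "a \<in> P1" for a
  proof
    fix b assume b: "b \<in> lcs G 3"
    have ac: "a \<in> carrier G" using a P1_carrier by auto
    have bc: "b \<in> carrier G" using b lcs_carrier by auto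
    have "cmt G a b = \<one>" using c13 a b by blast
    then have "cmt G b a = \<one>" using cmt_inv[OF ac bc] by (metis inv_one)
    then show "b \<in> cent a" using bc unfolding cent_def by simp
  qed
  have xin: "x \<in> cent a" if a: "a \<in> P1" for a
    using Px a cent_sym[OF xc] P1_carrier by blast
  have "\<forall>a\<in>P1. P1 \<subseteq> cent a"
  proof (cases "x \<in> lcs G 2")
    case True
    have l2: "lcs G 2 \<subseteq> cent a" if a: "a \<in> P1" for a
      using sandwich[OF lcs_subgroup lcs_subgroup cent_subgroup lcs32 L3[OF a] card23, of x] a x True xin[OF a]
        P1_carrier by auto
    obtain u where u: "u \<in> P1" "u \<notin> lcs G 2" by (rule exists_P1_not_lcs2)
    have uc: "u \<in> carrier G" using u P1_carrier by auto
    have Pu: "P1 \<subseteq> cent u"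
      using sandwich[OF lcs_subgroup P1_subgroup cent_subgroup[OF uc] lcs2_P1 l2[OF u(1)] card_P1_lcs2, of u]
        u cent_self[OF uc] by auto
    show ?thesis
    proof
      fix b assume b: "b \<in> P1"
      have bc: "b \<in> carrier G" using b P1_carrier by auto
      have "u \<in> cent b" using Pu b cent_sym[OF uc bc] by blast
      then show "P1 \<subseteq> cent b"
        using sandwich[OF lcs_subgroup P1_subgroup cent_subgroup[OF bc] lcs2_P1 l2[OF b] card_P1_lcs2, of u] u
        by auto
    qed
  next
    case False
    obtain w where w: "w \<in> lcs G 2" "w \<notin> lcs G 3" by (rule obtain_w)
    have wc: "w \<in> carrier G" using w lcs_carrier by auto
    have wP: "w \<in> P1" using w lcs2_P1 by auto
    have l2w: "lcs G 2 \<subseteq> cent w"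
      using sandwich[OF lcs_subgroup lcs_subgroup cent_subgroup[OF wc] lcs32 L3[OF wP] card23, of w]
        w cent_self[OF wc] by auto
    have Pa: "P1 \<subseteq> cent a" if a: "a \<in> lcs G 2" for a
    proof -
      have ac: "a \<in> carrier G" using a lcs_carrier by auto
      have aP: "a \<in> P1" using a lcs2_P1 by auto
      have "w \<in> cent a" using l2w a cent_sym[OF wc ac] by blast
      then have "lcs G 2 \<subseteq> cent a"
        using sandwich[OF lcs_subgroup lcs_subgroup cent_subgroup[OF ac] lcs32 L3[OF aP] card23, of w] w
        by auto
      then show ?thesis
        using sandwich[OF lcs_subgroup P1_subgroup cent_subgroup[OF ac] lcs2_P1 _ card_P1_lcs2, of x]
          x False xin[OF aP] by auto
    qed
    show ?thesis
    proof
      fix b assume b: "b \<in> P1"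
      have bc: "b \<in> carrier G" using b P1_carrier by auto
      have "lcs G 2 \<subseteq> cent b"
      proof
        fix a assume a: "a \<in> lcs G 2"
        have ac: "a \<in> carrier G" using a lcs_carrier by auto
        have "b \<in> cent a" using Pa[OF a] b by blast
        then show "a \<in> cent b" using cent_sym[OF ac bc] by blast
      qed
      then show "P1 \<subseteq> cent b"
        using sandwich[OF lcs_subgroup P1_subgroup cent_subgroup[OF bc] lcs2_P1 _ card_P1_lcs2, of x]
          x False xin[OF b] by auto
    qed
  qed
  then show ?thesis using abelian_P1_iff by blast
qed

lemma caseB_card3:
  assumes c13: "\<And>g a. g \<in> P1 \<Longrightarrow> a \<in> lcs G 3 \<Longrightarrow> cmt G g a = \<one>"
    and x: "x \<in> lcs G 3" "x \<notin> lcs G (m - 1)"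
  shows "card (cent x) = p ^ (m - 1)"
proof -
  have xc: "x \<in> carrier G" using x lcs_carrier by auto
  have "P1 \<subseteq> cent x" using c13 x(1) P1_carrier unfolding cent_def by auto
  then have ge: "p ^ (m - 1) \<le> card (cent x)"
    using card_mono[OF fin_sub[OF cent_carrier]] P1_card by metis
  have ne: "cent x \<noteq> carrier G" using center_iff[OF xc] x by blast
  have "p * card (cent x) \<le> p ^ m"
    using strict_sub_card[OF cent_subgroup[OF xc] subgroup_self cent_carrier ne] card_G by simp
  then have "card (cent x) \<le> p ^ (m - 1)" using pm1 p_pos by simp
  then show ?thesis using ge by simp
qed

lemma caseB_card1:
  assumes c13: "\<And>g a. g \<in> P1 \<Longrightarrow> a \<in> lcs G 3 \<Longrightarrow> cmt G g a = \<one>"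
    and nab: "\<not> abelian_set G P1"
    and x: "x \<in> P1" "x \<notin> lcs G 3"
  shows "card (cent x) = p ^ (m - 2)"
proof -
  have xc: "x \<in> carrier G" using x P1_carrier by auto
  have "lcs G (m - 1) \<subseteq> lcs G 3" using lcs_antimono m4 by simp
  then have xZ: "x \<notin> lcs G (m - 1)" using x by blast
  have sub: "cent x \<subseteq> P1" using cent_in_P1[OF x(1) xZ] .
  have ne: "cent x \<noteq> P1"
  proof
    assume "cent x = P1"
    then have "abelian_set G P1" using caseB_P1ab[OF c13 x] by simp
    then show False using nab by simp
  qed
  have L3: "lcs G 3 \<subseteq> cent x"
  proof
    fix b assume b: "b \<in> lcs G 3"
    have bc: "b \<in> carrier G" using b lcs_carrier by auto
    have "cmt G x b = \<one>" using c13 x b by blast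
    then have "cmt G b x = \<one>" using cmt_inv[OF xc bc] by (metis inv_one)
    then show "b \<in> cent x" using bc unfolding cent_def by simp
  qed
  have ne3: "lcs G 3 \<noteq> cent x" using cent_self[OF xc] x by blast
  have "p * card (lcs G 3) \<le> card (cent x)"
    using strict_sub_card[OF lcs_subgroup cent_subgroup[OF xc] L3 ne3] .
  moreover have "card (lcs G 3) = p ^ (m - 3)" using lcs_card[of 3] m4 by simp
  moreover have "p * p ^ (m - 3) = p ^ (m - 2)"
  proof -
    have "m - 2 = Suc (m - 3)" using m4 by simp
    then show ?thesis by (metis power_Suc)
  qed
  ultimately have ge: "p ^ (m - 2) \<le> card (cent x)" by simp
  have "p * card (cent x) \<le> card P1"
    using strict_sub_card[OF cent_subgroup[OF xc] P1_subgroup sub ne] .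
  moreover have "p ^ (m - 1) = p * p ^ (m - 2)"
  proof -
    have "m - 1 = Suc (m - 2)" using m4 by simp
    then show ?thesis by (metis power_Suc)
  qed
  ultimately have "card (cent x) \<le> p ^ (m - 2)" using P1_card p_pos by simp
  then show ?thesis using ge by simp
qed

end

context mc begin

lemma P_series_ge2: "2 \<le> i \<Longrightarrow> i \<le> m \<Longrightarrow> P_series G m i = lcs G i"
  unfolding P_series_def by simp

lemma P_series_sub_lcs: "1 \<le> k \<Longrightarrow> P_series G m k \<subseteq> lcs G k"
  unfolding P_series_def using P1_carrier[unfolded P1_def] by (auto simp: P1_def)

lemma lcs_sub_P_series: "2 \<le> k \<Longrightarrow> lcs G k \<subseteq> P_series G m k"
proof -
  assume k: "2 \<le> k"
  show ?thesis
  proof (cases "k \<le> m")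
    case True then show ?thesis using k unfolding P_series_def by simp
  next
    case False
    then have "lcs G k \<subseteq> lcs G m" using lcs_antimono by simp
    then show ?thesis using False k lcs_m unfolding P_series_def by auto
  qed
qed

lemma P_series_carrier: "P_series G m k \<subseteq> carrier G"
  unfolding P_series_def using lcs_carrier P1_carrier by (auto simp: P1_def)

lemma doc0: "doc_condition G m 0"
  unfolding doc_condition_def
proof (intro allI impI)
  fix i j :: nat assume i: "1 \<le> i" and j: "1 \<le> j"
  have "comm_subgroup G (P_series G m i) (P_series G m j) \<subseteq> lcs G (i + j)"
  proof (subst comm_subgroup_le[OF lcs_subgroup P_series_carrier P_series_carrier], intro ballI)
    fix h k assume h: "h \<in> P_series G m i" and k: "k \<in> P_series G m j"
    show "cmt G h k \<in> lcs G (i + j)"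
      using lcs_mutual[OF i j] h k P_series_sub_lcs[OF i] P_series_sub_lcs[OF j] by blast
  qed
  moreover have "lcs G (i + j) \<subseteq> P_series G m (i + j + 0)" using lcs_sub_P_series i j by simp
  ultimately show "comm_subgroup G (P_series G m i) (P_series G m j) \<subseteq> P_series G m (i + j + 0)" by blast
qed

lemma doc_bound:
  assumes nab: "\<not> abelian_set G P1" and d: "doc_condition G m l"
  shows "l \<le> m"
proof (rule ccontr)
  assume "\<not> l \<le> m"
  then have big: "P_series G m (1 + 1 + l) = {\<one>}" unfolding P_series_def by simp
  obtain a b where ab: "a \<in> P1" "b \<in> P1" "a \<otimes> b \<noteq> b \<otimes> a" using nab unfolding abelian_set_def by blast
  have "cmt G a b \<in> comm_subgroup G (P_series G m 1) (P_series G m 1)"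
    using comm_subgroup_mem ab P1_series by simp
  then have "cmt G a b = \<one>" using d big unfolding doc_condition_def by (metis le_refl subsetD singletonD)
  then show False using ab cmt_one_iff P1_carrier by blast
qed

lemma derive_doc:
  assumes deg: "degree_of_commutativity G m > 0"
  shows "mcd G p m"
proof
  fix i g a assume i: "2 \<le> i" "i \<le> m - 2" and g: "g \<in> P1" and a: "a \<in> lcs G i"
  show "cmt G g a \<in> lcs G (i + 2)"
  proof (cases "abelian_set G P1")
    case True
    have "lcs G i \<subseteq> lcs G 2" using lcs_antimono i by simp
    then have "a \<in> P1" using a lcs2_P1 by blast
    then have "cmt G g a = \<one>" using True g cmt_one_iff P1_carrier unfolding abelian_set_def by blast
    then show ?thesis by simp
  next
    case False
    let ?d = "GREATEST l. doc_condition G m l"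
    have "degree_of_commutativity G m = ?d"
      using False P1_series unfolding degree_of_commutativity_def by simp
    then have d0: "0 < ?d" using deg by simp
    have dd: "doc_condition G m ?d"
      by (rule GreatestI_nat[where P = "doc_condition G m", OF doc0]) (use doc_bound[OF False] in blast)
    have "cmt G g a \<in> comm_subgroup G (P_series G m 1) (P_series G m i)"
      using comm_subgroup_mem g a P1_series P_series_ge2 i m4 by simp
    moreover have inst: "\<forall>j\<ge>1. comm_subgroup G (P_series G m 1) (P_series G m j) \<subseteq> P_series G m (1 + j + ?d)"
      using dd unfolding doc_condition_def by blast
    moreover have "1 \<le> i" using i by simp
    ultimately have "cmt G g a \<in> P_series G m (1 + i + ?d)" by blast
    moreover have "P_series G m (1 + i + ?d) \<subseteq> lcs G (i + 2)"
    proof -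
      have "P_series G m (1 + i + ?d) \<subseteq> lcs G (1 + i + ?d)" using P_series_sub_lcs by simp
      also have "\<dots> \<subseteq> lcs G (i + 2)" using lcs_antimono d0 by simp
      finally show ?thesis .
    qed
    ultimately show ?thesis by blast
  qed
qed

lemma sum_split:
  assumes "T \<subseteq> S" "finite S"
  shows "(\<Sum>x\<in>S. f x) = (\<Sum>x\<in>T. f x) + (\<Sum>x\<in>S - T. f x)"
  using sum.subset_diff[OF assms, of f] by (simp add: add.commute)

lemma sum_const_on:
  assumes "\<And>x. x \<in> S \<Longrightarrow> f x = c"
  shows "(\<Sum>x\<in>S. f x) = card S * (c::nat)"
  using assms by simp

lemma card_diff_sub: "T \<subseteq> S \<Longrightarrow> S \<subseteq> carrier G \<Longrightarrow> card (S - T) = card S - card T"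
  using fin_sub card_Diff_subset finite_subset by metis

end

context mcd begin

lemma cent_Z: assumes x: "x \<in> lcs G (m - 1)" shows "card (cent x) = p ^ m"
proof -
  have xc: "x \<in> carrier G" using x lcs_carrier by blast
  have "cent x = carrier G" using center_iff[OF xc] x by simp
  then show ?thesis using card_G by simp
qed

lemma nat_id1:
  assumes ab: "abelian_set G P1"
  shows "alpha G n * p ^ m = p * (p ^ m) ^ n + (p ^ (m - 1) - p) * (p ^ (m - 1)) ^ n + (p ^ m - p ^ (m - 1)) * (p ^ 2) ^ n"
proof -
  let ?Z = "lcs G (m - 1)"
  let ?f = "\<lambda>g. card (cent g) ^ n"
  have ZP: "?Z \<subseteq> P1" by (rule lcs_m1_P1)
  have s1: "(\<Sum>g\<in>carrier G. ?f g) = (\<Sum>g\<in>?Z. ?f g) + (\<Sum>g\<in>carrier G - ?Z. ?f g)"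
    by (rule sum_split[OF lcs_carrier fin])
  have s2: "(\<Sum>g\<in>carrier G - ?Z. ?f g) = (\<Sum>g\<in>P1 - ?Z. ?f g) + (\<Sum>g\<in>carrier G - P1. ?f g)"
  proof -
    have "(\<Sum>g\<in>carrier G - ?Z. ?f g) = (\<Sum>g\<in>P1 - ?Z. ?f g) + (\<Sum>g\<in>(carrier G - ?Z) - (P1 - ?Z). ?f g)"
      by (rule sum_split) (use P1_carrier fin in auto)
    moreover have "(carrier G - ?Z) - (P1 - ?Z) = carrier G - P1" using ZP by blast
    ultimately show ?thesis by simp
  qed
  have z: "(\<Sum>g\<in>?Z. ?f g) = p * (p ^ m) ^ n"
    using sum_const_on[of ?Z ?f "(p ^ m) ^ n"] cent_Z card_lcs_m1 by simp
  have a: "(\<Sum>g\<in>P1 - ?Z. ?f g) = (p ^ (m - 1) - p) * (p ^ (m - 1)) ^ n"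
  proof -
    have "(\<Sum>g\<in>P1 - ?Z. ?f g) = card (P1 - ?Z) * (p ^ (m - 1)) ^ n"
      by (rule sum_const_on) (use caseA_card[OF ab] in auto)
    moreover have "card (P1 - ?Z) = p ^ (m - 1) - p"
      using card_diff_sub[OF ZP P1_carrier] P1_card card_lcs_m1 by simp
    ultimately show ?thesis by simp
  qed
  have b: "(\<Sum>g\<in>carrier G - P1. ?f g) = (p ^ m - p ^ (m - 1)) * (p ^ 2) ^ n"
  proof -
    have "(\<Sum>g\<in>carrier G - P1. ?f g) = card (carrier G - P1) * (p ^ 2) ^ n"
      by (rule sum_const_on) (use cent_out_card in auto)
    moreover have "card (carrier G - P1) = p ^ m - p ^ (m - 1)"
      using card_diff_sub[OF P1_carrier order_refl] P1_card card_G by simp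
    ultimately show ?thesis by simp
  qed
  show ?thesis using burnside_alpha[of n] s1 s2 z a b by simp
qed

lemma nat_id2:
  assumes c13: "\<And>g a. g \<in> P1 \<Longrightarrow> a \<in> lcs G 3 \<Longrightarrow> cmt G g a = \<one>"
    and nab: "\<not> abelian_set G P1"
  shows "alpha G n * p ^ m = p * (p ^ m) ^ n + (p ^ (m - 3) - p) * (p ^ (m - 1)) ^ n
      + (p ^ (m - 1) - p ^ (m - 3)) * (p ^ (m - 2)) ^ n + (p ^ m - p ^ (m - 1)) * (p ^ 2) ^ n"
proof -
  let ?Z = "lcs G (m - 1)" and ?L = "lcs G 3"
  let ?f = "\<lambda>g. card (cent g) ^ n"
  have ZL: "?Z \<subseteq> ?L" using lcs_antimono m4 by simp
  have LP: "?L \<subseteq> P1" using lcs32 lcs2_P1 by blast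
  have s1: "(\<Sum>g\<in>carrier G. ?f g) = (\<Sum>g\<in>?Z. ?f g) + (\<Sum>g\<in>carrier G - ?Z. ?f g)"
    by (rule sum_split[OF lcs_carrier fin])
  have s2: "(\<Sum>g\<in>carrier G - ?Z. ?f g) = (\<Sum>g\<in>?L - ?Z. ?f g) + (\<Sum>g\<in>carrier G - ?L. ?f g)"
  proof -
    have "(\<Sum>g\<in>carrier G - ?Z. ?f g) = (\<Sum>g\<in>?L - ?Z. ?f g) + (\<Sum>g\<in>(carrier G - ?Z) - (?L - ?Z). ?f g)"
      by (rule sum_split) (use lcs_carrier fin in auto)
    moreover have "(carrier G - ?Z) - (?L - ?Z) = carrier G - ?L" using ZL by blast
    ultimately show ?thesis by simp
  qed
  have s3: "(\<Sum>g\<in>carrier G - ?L. ?f g) = (\<Sum>g\<in>P1 - ?L. ?f g) + (\<Sum>g\<in>carrier G - P1. ?f g)"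
  proof -
    have "(\<Sum>g\<in>carrier G - ?L. ?f g) = (\<Sum>g\<in>P1 - ?L. ?f g) + (\<Sum>g\<in>(carrier G - ?L) - (P1 - ?L). ?f g)"
      by (rule sum_split) (use P1_carrier fin in auto)
    moreover have "(carrier G - ?L) - (P1 - ?L) = carrier G - P1" using LP by blast
    ultimately show ?thesis by simp
  qed
  have z: "(\<Sum>g\<in>?Z. ?f g) = p * (p ^ m) ^ n"
    using sum_const_on[of ?Z ?f "(p ^ m) ^ n"] cent_Z card_lcs_m1 by simp
  have a: "(\<Sum>g\<in>?L - ?Z. ?f g) = (p ^ (m - 3) - p) * (p ^ (m - 1)) ^ n"
  proof -
    have "(\<Sum>g\<in>?L - ?Z. ?f g) = card (?L - ?Z) * (p ^ (m - 1)) ^ n"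
      by (rule sum_const_on) (use caseB_card3[OF c13] in auto)
    moreover have "card (?L - ?Z) = p ^ (m - 3) - p"
      using card_diff_sub[OF ZL lcs_carrier] lcs_card[of 3] m4 card_lcs_m1 by simp
    ultimately show ?thesis by simp
  qed
  have c: "(\<Sum>g\<in>P1 - ?L. ?f g) = (p ^ (m - 1) - p ^ (m - 3)) * (p ^ (m - 2)) ^ n"
  proof -
    have "(\<Sum>g\<in>P1 - ?L. ?f g) = card (P1 - ?L) * (p ^ (m - 2)) ^ n"
      by (rule sum_const_on) (use caseB_card1[OF c13 nab] in auto)
    moreover have "card (P1 - ?L) = p ^ (m - 1) - p ^ (m - 3)"
      using card_diff_sub[OF LP P1_carrier] lcs_card[of 3] m4 P1_card by simp
    ultimately show ?thesis by simp
  qed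
  have b: "(\<Sum>g\<in>carrier G - P1. ?f g) = (p ^ m - p ^ (m - 1)) * (p ^ 2) ^ n"
  proof -
    have "(\<Sum>g\<in>carrier G - P1. ?f g) = card (carrier G - P1) * (p ^ 2) ^ n"
      by (rule sum_const_on) (use cent_out_card in auto)
    moreover have "card (carrier G - P1) = p ^ m - p ^ (m - 1)"
      using card_diff_sub[OF P1_carrier order_refl] P1_card card_G by simp
    ultimately show ?thesis by simp
  qed
  show ?thesis using burnside_alpha[of n] s1 s2 s3 z a b c by simp
qed

end

theorem theorem7p6:
  fixes G :: "('a, 'b) monoid_scheme" and p m :: nat
  assumes "maximal_class G p m"
    and "degree_of_commutativity G m > 0"
  shows "((\<exists>H. maximal_subgroup G H \<and> abelian_set G H) \<longrightarrow>
           orbit_gf G = fps_const (1 / of_nat p ^ m) *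
             (fps_const (of_nat p) / (1 - fps_const (of_nat p ^ m) * fps_X)
              + fps_const (of_nat p ^ m - of_nat p ^ (m - 1)) / (1 - fps_const (of_nat p ^ 2) * fps_X)
              + fps_const (of_nat p ^ (m - 1) - of_nat p) / (1 - fps_const (of_nat p ^ (m - 1)) * fps_X))) \<and>
        (comm_subgroup G (P_series G m 1) (P_series G m 3) = {\<one>\<^bsub>G\<^esub>} \<and>
         \<not> (\<exists>H. maximal_subgroup G H \<and> abelian_set G H) \<longrightarrow>
           orbit_gf G = fps_const (1 / of_nat p ^ m) *
             (fps_const (of_nat p) / (1 - fps_const (of_nat p ^ m) * fps_X)
              + fps_const (of_nat p ^ m - of_nat p ^ (m - 1)) / (1 - fps_const (of_nat p ^ 2) * fps_X)
              + fps_const (of_nat p ^ (m - 1) - of_nat p ^ (m - 3)) / (1 - fps_const (of_nat p ^ (m - 2)) * fps_X)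
              + fps_const (of_nat p ^ (m - 3) - of_nat p) / (1 - fps_const (of_nat p ^ (m - 1)) * fps_X)))"
proof -
  have mcG: "mc G p m" using assms(1) unfolding maximal_class_def mc_def mc_axioms_def by auto
  interpret mc G p m by (rule mcG)
  interpret mcd G p m by (rule derive_doc[OF assms(2)])
  have pos: "(0::rat) < of_nat p" using p_pos by simp
  have le1: "p \<le> p ^ (m - 1)" using p_pos m4 by (simp add: self_le_power)
  have le2: "p ^ (m - 1) \<le> p ^ m" using p_gt1 by (simp add: power_increasing)
  have le3: "p \<le> p ^ (m - 3)" using p_pos m4 by (simp add: self_le_power)
  have le4: "p ^ (m - 3) \<le> p ^ (m - 1)" using p_gt1 by (simp add: power_increasing)
  show ?thesis
  proof (intro conjI impI)
    assume "\<exists>H. maximal_subgroup G H \<and> abelian_set G H"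
    then obtain H where H: "maximal_subgroup G H" "abelian_set G H" by blast
    have ab: "abelian_set G P1" by (rule maxab_imp_P1ab[OF H])
    show "orbit_gf G = fps_const (1 / of_nat p ^ m) *
             (fps_const (of_nat p) / (1 - fps_const (of_nat p ^ m) * fps_X)
              + fps_const (of_nat p ^ m - of_nat p ^ (m - 1)) / (1 - fps_const (of_nat p ^ 2) * fps_X)
              + fps_const (of_nat p ^ (m - 1) - of_nat p) / (1 - fps_const (of_nat p ^ (m - 1)) * fps_X))"
      unfolding orbit_gf_def fps_geo
    proof (rule fps_ext)
      fix n
      have e: "alpha G n * p ^ m = p * (p ^ m) ^ n + (p ^ (m - 1) - p) * (p ^ (m - 1)) ^ n + (p ^ m - p ^ (m - 1)) * (p ^ 2) ^ n"
        by (rule nat_id1[OF ab])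
      have "(of_nat (alpha G n) :: rat) * of_nat p ^ m = of_nat (alpha G n * p ^ m)" by simp
      also have "\<dots> = of_nat p * (of_nat p ^ m) ^ n + (of_nat p ^ (m - 1) - of_nat p) * (of_nat p ^ (m - 1)) ^ n
          + (of_nat p ^ m - of_nat p ^ (m - 1)) * (of_nat p ^ 2) ^ n"
        unfolding e using le1 le2 by (simp add: of_nat_diff)
      finally have "(of_nat (alpha G n) :: rat) = 1 / of_nat p ^ m * (of_nat p * (of_nat p ^ m) ^ n + (of_nat p ^ m - of_nat p ^ (m - 1)) * (of_nat p ^ 2) ^ n
          + (of_nat p ^ (m - 1) - of_nat p) * (of_nat p ^ (m - 1)) ^ n)"
        using pos by (simp add: field_simps)
      then show "fps_nth (Abs_fps (\<lambda>n. of_nat (alpha G n)) :: rat fps) n = fps_nth (fps_const (1 / of_nat p ^ m) *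
            (Abs_fps (\<lambda>n. of_nat p * (of_nat p ^ m) ^ n) + Abs_fps (\<lambda>n. (of_nat p ^ m - of_nat p ^ (m - 1)) * (of_nat p ^ 2) ^ n)
             + Abs_fps (\<lambda>n. (of_nat p ^ (m - 1) - of_nat p) * (of_nat p ^ (m - 1)) ^ n))) n"
        by simp
    qed
  next
    assume a2: "comm_subgroup G (P_series G m 1) (P_series G m 3) = {\<one>\<^bsub>G\<^esub>} \<and> \<not> (\<exists>H. maximal_subgroup G H \<and> abelian_set G H)"
    have nab: "\<not> abelian_set G P1" using a2 P1_maximal by blast
    have P3: "P_series G m 3 = lcs G 3" using P_series_ge2 m4 by simp
    have c13: "cmt G g a = \<one>\<^bsub>G\<^esub>" if "g \<in> P1" "a \<in> lcs G 3" for g a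
      using comm_subgroup_mem[of g "P_series G m 1" a "P_series G m 3"] that a2 P3 P1_series by auto
    show "orbit_gf G = fps_const (1 / of_nat p ^ m) *
             (fps_const (of_nat p) / (1 - fps_const (of_nat p ^ m) * fps_X)
              + fps_const (of_nat p ^ m - of_nat p ^ (m - 1)) / (1 - fps_const (of_nat p ^ 2) * fps_X)
              + fps_const (of_nat p ^ (m - 1) - of_nat p ^ (m - 3)) / (1 - fps_const (of_nat p ^ (m - 2)) * fps_X)
              + fps_const (of_nat p ^ (m - 3) - of_nat p) / (1 - fps_const (of_nat p ^ (m - 1)) * fps_X))"
      unfolding orbit_gf_def fps_geo
    proof (rule fps_ext)
      fix n
      have e: "alpha G n * p ^ m = p * (p ^ m) ^ n + (p ^ (m - 3) - p) * (p ^ (m - 1)) ^ n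
          + (p ^ (m - 1) - p ^ (m - 3)) * (p ^ (m - 2)) ^ n + (p ^ m - p ^ (m - 1)) * (p ^ 2) ^ n"
        by (rule nat_id2[OF c13 nab])
      have "(of_nat (alpha G n) :: rat) * of_nat p ^ m = of_nat (alpha G n * p ^ m)" by simp
      also have "\<dots> = of_nat p * (of_nat p ^ m) ^ n + (of_nat p ^ (m - 3) - of_nat p) * (of_nat p ^ (m - 1)) ^ n
          + (of_nat p ^ (m - 1) - of_nat p ^ (m - 3)) * (of_nat p ^ (m - 2)) ^ n
          + (of_nat p ^ m - of_nat p ^ (m - 1)) * (of_nat p ^ 2) ^ n"
        unfolding e using le2 le3 le4 by (simp add: of_nat_diff)
      finally have "(of_nat (alpha G n) :: rat) = 1 / of_nat p ^ m * (of_nat p * (of_nat p ^ m) ^ n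
          + (of_nat p ^ m - of_nat p ^ (m - 1)) * (of_nat p ^ 2) ^ n
          + (of_nat p ^ (m - 1) - of_nat p ^ (m - 3)) * (of_nat p ^ (m - 2)) ^ n
          + (of_nat p ^ (m - 3) - of_nat p) * (of_nat p ^ (m - 1)) ^ n)"
        using pos by (simp add: field_simps)
      then show "fps_nth (Abs_fps (\<lambda>n. of_nat (alpha G n)) :: rat fps) n = fps_nth (fps_const (1 / of_nat p ^ m) *
            (Abs_fps (\<lambda>n. of_nat p * (of_nat p ^ m) ^ n) + Abs_fps (\<lambda>n. (of_nat p ^ m - of_nat p ^ (m - 1)) * (of_nat p ^ 2) ^ n)
             + Abs_fps (\<lambda>n. (of_nat p ^ (m - 1) - of_nat p ^ (m - 3)) * (of_nat p ^ (m - 2)) ^ n)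
             + Abs_fps (\<lambda>n. (of_nat p ^ (m - 3) - of_nat p) * (of_nat p ^ (m - 1)) ^ n))) n"
        by simp
    qed
  qed
qed

end
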